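(* Let $p,l$ be distinct odd primes and let $\Gamma=\psi(\tilde\Gamma)$ be the group described in the context. Then $\Gamma$ is a CSA-group: every maximal abelian subgroup $\Gamma_0$ of $\Gamma$ is malnormal, i.e. $g\Gamma_0g^{-1}\cap\Gamma_0=\{1\}$ for all $g\in\Gamma\setminus\Gamma_0$.
   Context: Let $p,l$ be distinct odd primes. Let $\mathbb H(\mathbb Z)$ be the ring of quaternions $x=x_0+x_1i+x_2j+x_3k$ with $x_0,\dots,x_3\in\mathbb Z$, where $i^2=j^2=k^2=-1$, $ij=-ji=k$; write $|x|^2=x_0^2+x_1^2+x_2^2+x_3^2$. Fix $c_p,d_p\in\mathbb Q_p$ with $c_p^2+d_p^2+1=0$ and $c_l,d_l\in\mathbb Q_l$ with $c_l^2+d_l^2+1=0$. Define $\psi:\mathbb H(\mathbb Z)\setminus\{0\}\to G:=PGL_2(\mathbb Q_p)\times PGL_2(\mathbb Q_l)$ by sending $x$ to the class of the pair $\left(\begin{pmatrix} x_0+x_1c_p+x_3d_p & -x_1d_p+x_2+x_3c_p\\ -x_1d_p-x_2+x_3c_p & x_0-x_1c_p-x_3d_p\end{pmatrix},\begin{pmatrix} x_0+x_1c_l+x_3d_l & -x_1d_l+x_2+x_3c_l\\ -x_1d_l-x_2+x_3c_l & x_0-x_1c_l-x_3d_l\end{pmatrix}\right)$. Let $\tilde\Gamma$ be the set of $x\in\mathbb H(\mathbb Z)$ such that $|x|^2=p^rl^s$ for some integers $r,s\ge 0$, and such that $x_0$ is odd and $x_1,x_2,x_3$ are even if $|x|^2\equiv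 1\pmod 4$, while $x_1$ is even and $x_0,x_2,x_3$ are odd if $|x|^2\equiv 3\pmod 4$. Then $\Gamma=\psi(\tilde\Gamma)$ is a torsion-free cocompact lattice in $G$. *)

theory Defs
  imports "HOL-Algebra.Group" "HOL-Computational_Algebra.Computational_Algebra"
begin

definition rat_pval :: "nat \<Rightarrow> rat \<Rightarrow> int" where
  "rat_pval p q = (let (a, b) = quotient_of q in
      int (multiplicity (int p) a) - int (multiplicity (int p) b))"

definition psmall :: "nat \<Rightarrow> nat \<Rightarrow> rat \<Rightarrow> bool" where
  "psmall p k q \<longleftrightarrow> q = 0 \<or> rat_pval p q \<ge> int k"

definition pcauchy :: "nat \<Rightarrow> (nat \<Rightarrow> rat) \<Rightarrow> bool" where
  "pcauchy p X \<longleftrightarrow> (\<forall>k. \<exists>N. \<forall>m\<ge>N. \<forall>n\<ge>N. psmall p k (X m - X n))"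

definition pnull :: "nat \<Rightarrow> (nat \<Rightarrow> rat) \<Rightarrow> bool" where
  "pnull p X \<longleftrightarrow> (\<forall>k. \<exists>N. \<forall>n\<ge>N. psmall p k (X n))"

type_synonym qp = "(nat \<Rightarrow> rat) set"

definition qp_cls :: "nat \<Rightarrow> (nat \<Rightarrow> rat) \<Rightarrow> qp" where
  "qp_cls p X = {Y. pcauchy p Y \<and> pnull p (\<lambda>n. X n - Y n)}"

definition Qp :: "nat \<Rightarrow> qp set" where
  "Qp p = {qp_cls p X | X. pcauchy p X}"

definition qp_rep :: "qp \<Rightarrow> nat \<Rightarrow> rat" where
  "qp_rep a = (SOME X. X \<in> a)"

definition qp_of_int :: "nat \<Rightarrow> int \<Rightarrow> qp" where
  "qp_of_int p z = qp_cls p (\<lambda>_. of_int z)"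

definition qp_zero :: "nat \<Rightarrow> qp" where "qp_zero p = qp_of_int p 0"
definition qp_one :: "nat \<Rightarrow> qp" where "qp_one p = qp_of_int p 1"

definition qp_add :: "nat \<Rightarrow> qp \<Rightarrow> qp \<Rightarrow> qp" where
  "qp_add p a b = qp_cls p (\<lambda>n. qp_rep a n + qp_rep b n)"

definition qp_mul :: "nat \<Rightarrow> qp \<Rightarrow> qp \<Rightarrow> qp" where
  "qp_mul p a b = qp_cls p (\<lambda>n. qp_rep a n * qp_rep b n)"

definition qp_neg :: "nat \<Rightarrow> qp \<Rightarrow> qp" where
  "qp_neg p a = qp_cls p (\<lambda>n. - qp_rep a n)"

definition qp_sub :: "nat \<Rightarrow> qp \<Rightarrow> qp \<Rightarrow> qp" where
  "qp_sub p a b = qp_add p a (qp_neg p b)"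

text \<open>A matrix (a,b,c,d) stands for [[a,b],[c,d]].\<close>
type_synonym qpmat = "qp \<times> qp \<times> qp \<times> qp"

fun m2_mul :: "nat \<Rightarrow> qpmat \<Rightarrow> qpmat \<Rightarrow> qpmat" where
  "m2_mul p (a, b, c, d) (e, f, g, h) =
     (qp_add p (qp_mul p a e) (qp_mul p b g), qp_add p (qp_mul p a f) (qp_mul p b h),
      qp_add p (qp_mul p c e) (qp_mul p d g), qp_add p (qp_mul p c f) (qp_mul p d h))"

fun m2_det :: "nat \<Rightarrow> qpmat \<Rightarrow> qp" where
  "m2_det p (a, b, c, d) = qp_sub p (qp_mul p a d) (qp_mul p b c)"

fun m2_scale :: "nat \<Rightarrow> qp \<Rightarrow> qpmat \<Rightarrow> qpmat" where
  "m2_scale p t (a, b, c, d) = (qp_mul p t a, qp_mul p t b, qp_mul p t c, qp_mul p t d)"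

definition GL2 :: "nat \<Rightarrow> qpmat set" where
  "GL2 p = {(a, b, c, d). a \<in> Qp p \<and> b \<in> Qp p \<and> c \<in> Qp p \<and> d \<in> Qp p
              \<and> m2_det p (a, b, c, d) \<noteq> qp_zero p}"

definition pgl_cls :: "nat \<Rightarrow> qpmat \<Rightarrow> qpmat set" where
  "pgl_cls p M = {N \<in> GL2 p. \<exists>t\<in>Qp p. t \<noteq> qp_zero p \<and> N = m2_scale p t M}"

definition PGL2 :: "nat \<Rightarrow> qpmat set set" where
  "PGL2 p = {pgl_cls p M | M. M \<in> GL2 p}"

definition pgl_mul :: "nat \<Rightarrow> qpmat set \<Rightarrow> qpmat set \<Rightarrow> qpmat set" where
  "pgl_mul p A B = pgl_cls p (m2_mul p (SOME M. M \<in> A) (SOME M. M \<in> B))"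

definition pgl_one :: "nat \<Rightarrow> qpmat set" where
  "pgl_one p = pgl_cls p (qp_one p, qp_zero p, qp_zero p, qp_one p)"

definition G_grp :: "nat \<Rightarrow> nat \<Rightarrow> (qpmat set \<times> qpmat set) monoid" where
  "G_grp p l = \<lparr> carrier = PGL2 p \<times> PGL2 l,
                 monoid.mult = (\<lambda>(A, B) (C, D). (pgl_mul p A C, pgl_mul l B D)),
                 monoid.one = (pgl_one p, pgl_one l) \<rparr>"

text \<open>x = x0 + x1 i + x2 j + x3 k is represented as (x0, x1, x2, x3).\<close>
type_synonym quat = "int \<times> int \<times> int \<times> int"

fun qnorm :: "quat \<Rightarrow> int" where
  "qnorm (x0, x1, x2, x3) = x0^2 + x1^2 + x2^2 + x3^2"

definition tildeGamma :: "nat \<Rightarrow> nat \<Rightarrow> quat set" where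
  "tildeGamma p l = {(x0, x1, x2, x3).
      (\<exists>r s. qnorm (x0, x1, x2, x3) = int p ^ r * int l ^ s) \<and>
      (qnorm (x0, x1, x2, x3) mod 4 = 1 \<longrightarrow> odd x0 \<and> even x1 \<and> even x2 \<and> even x3) \<and>
      (qnorm (x0, x1, x2, x3) mod 4 = 3 \<longrightarrow> even x1 \<and> odd x0 \<and> odd x2 \<and> odd x3)}"

text \<open>The matrix attached to x at the prime p, with c,d in Q_p, c^2+d^2+1=0.\<close>
fun psi_mat :: "nat \<Rightarrow> qp \<Rightarrow> qp \<Rightarrow> quat \<Rightarrow> qpmat" where
  "psi_mat p c d (x0, x1, x2, x3) =
     (let X0 = qp_of_int p x0; X1 = qp_of_int p x1; X2 = qp_of_int p x2; X3 = qp_of_int p x3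
      in (qp_add p (qp_add p X0 (qp_mul p X1 c)) (qp_mul p X3 d),
          qp_add p (qp_add p (qp_neg p (qp_mul p X1 d)) X2) (qp_mul p X3 c),
          qp_add p (qp_sub p (qp_neg p (qp_mul p X1 d)) X2) (qp_mul p X3 c),
          qp_sub p (qp_sub p X0 (qp_mul p X1 c)) (qp_mul p X3 d)))"

definition psi :: "nat \<Rightarrow> nat \<Rightarrow> qp \<Rightarrow> qp \<Rightarrow> qp \<Rightarrow> qp \<Rightarrow> quat \<Rightarrow> qpmat set \<times> qpmat set" where
  "psi p l cp dp cl dl x = (pgl_cls p (psi_mat p cp dp x), pgl_cls l (psi_mat l cl dl x))"

definition Gamma_grp :: "nat \<Rightarrow> nat \<Rightarrow> qp \<Rightarrow> qp \<Rightarrow> qp \<Rightarrow> qp \<Rightarrow> (qpmat set \<times> qpmat set) monoid" where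
  "Gamma_grp p l cp dp cl dl =
     (G_grp p l) \<lparr> carrier := psi p l cp dp cl dl ` tildeGamma p l \<rparr>"

definition abelian_set :: "('a, 'b) monoid_scheme \<Rightarrow> 'a set \<Rightarrow> bool" where
  "abelian_set H A \<longleftrightarrow> (\<forall>x\<in>A. \<forall>y\<in>A. x \<otimes>\<^bsub>H\<^esub> y = y \<otimes>\<^bsub>H\<^esub> x)"

definition maximal_abelian_subgroup :: "'a set \<Rightarrow> ('a, 'b) monoid_scheme \<Rightarrow> bool" where
  "maximal_abelian_subgroup A H \<longleftrightarrow> subgroup A H \<and> abelian_set H A \<and>
     (\<forall>B. subgroup B H \<and> abelian_set H B \<and> A \<subseteq> B \<longrightarrow> B = A)"

definition malnormal :: "'a set \<Rightarrow> ('a, 'b) monoid_scheme \<Rightarrow> bool" where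
  "malnormal A H \<longleftrightarrow> (\<forall>g \<in> carrier H - A.
     {g \<otimes>\<^bsub>H\<^esub> a \<otimes>\<^bsub>H\<^esub> inv\<^bsub>H\<^esub> g | a. a \<in> A} \<inter> A = {\<one>\<^bsub>H\<^esub>})"

definition CSA_group :: "('a, 'b) monoid_scheme \<Rightarrow> bool" where
  "CSA_group H \<longleftrightarrow> (\<forall>A. maximal_abelian_subgroup A H \<longrightarrow> malnormal A H)"

end

theory Submission
  imports Defs
begin


lemma nu_p: "prime (p::nat) \<Longrightarrow> \<not> is_unit (int p)"
  using not_prime_unit[of "int p"] prime_gt_1_nat[of p] by simp

lemma int_decomp:
  fixes p :: nat and z :: int
  assumes "prime p" "z \<noteq> 0"
  obtains i z' where "z = int p ^ i * z'" "\<not> int p dvd z'"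
  using multiplicity_decompose'[OF assms(2) nu_p[OF assms(1)]] that by blast

lemma psmall_char:
  fixes p :: nat
  assumes p: "prime p"
  shows "psmall p k q \<longleftrightarrow> (\<exists>a b. b \<noteq> 0 \<and> \<not> int p dvd b \<and> int p ^ k dvd a \<and> q = of_int a / of_int b)"
proof
  have pe: "prime_elem (int p)" using p by simp
  have nu: "\<not> is_unit (int p)" using p by (rule nu_p)
  assume "psmall p k q"
  show "\<exists>a b. b \<noteq> 0 \<and> \<not> int p dvd b \<and> int p ^ k dvd a \<and> q = of_int a / of_int b"
  proof (cases "q = 0")
    case True then show ?thesis
      apply (rule_tac x=0 in exI, rule_tac x=1 in exI) using p by (auto simp: prime_gt_1_nat)
  next
    case False
    obtain n d where nd: "quotient_of q = (n, d)" by (cases "quotient_of q") auto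
    have d0: "d > 0" using quotient_of_denom_pos[OF nd] .
    have cop: "coprime n d" using quotient_of_coprime[OF nd] .
    have qe: "q = of_int n / of_int d" using quotient_of_div[OF nd] .
    have n0: "n \<noteq> 0" using False qe by auto
    have v: "int (multiplicity (int p) n) - int (multiplicity (int p) d) \<ge> int k"
      using \<open>psmall p k q\<close> False nd unfolding psmall_def rat_pval_def by auto
    have nd_d: "\<not> int p dvd d"
    proof
      assume "int p dvd d"
      hence "\<not> int p dvd n" using cop p
        using coprime_common_divisor[of n d "int p"] nu by blast
      hence "multiplicity (int p) n = 0" by (rule not_dvd_imp_multiplicity_0)
      moreover have "multiplicity (int p) d > 0" using \<open>int p dvd d\<close> multiplicity_gt_zero_iff[of d "int p"] d0 nu by simp
      ultimately show False using v by simp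
    qed
    hence "multiplicity (int p) d = 0" by (rule not_dvd_imp_multiplicity_0)
    hence "k \<le> multiplicity (int p) n" using v by simp
    hence "int p ^ k dvd n" by (rule multiplicity_dvd')
    then show ?thesis using nd_d d0 qe by (intro exI[of _ n] exI[of _ d]) auto
  qed
next
  have pe: "prime_elem (int p)" using p by simp
  have nu: "\<not> is_unit (int p)" using p by (rule nu_p)
  assume "\<exists>a b. b \<noteq> 0 \<and> \<not> int p dvd b \<and> int p ^ k dvd a \<and> q = of_int a / of_int b"
  then obtain a b where ab: "b \<noteq> 0" "\<not> int p dvd b" "int p ^ k dvd a" "q = of_int a / of_int b" by blast
  show "psmall p k q"
  proof (cases "a = 0")
    case True then show ?thesis using ab by (simp add: psmall_def)
  next
    case False
    hence q0: "q \<noteq> 0" using ab by auto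
    obtain n d where nd: "quotient_of q = (n, d)" by (cases "quotient_of q") auto
    have d0: "d > 0" using quotient_of_denom_pos[OF nd] .
    have cop: "coprime n d" using quotient_of_coprime[OF nd] .
    have qe: "q = of_int n / of_int d" using quotient_of_div[OF nd] .
    have n0: "n \<noteq> 0" using q0 qe by auto
    have "of_int n / of_int d = (of_int a / of_int b :: rat)" using qe ab by simp
    hence "of_int (n * b) = (of_int (a * d) :: rat)" using d0 ab(1) by (simp add: field_simps)
    hence eq: "n * b = a * d" by (simp only: of_int_eq_iff)
    have "multiplicity (int p) (n * b) = multiplicity (int p) (a * d)" using eq by simp
    hence m: "multiplicity (int p) n + multiplicity (int p) b = multiplicity (int p) a + multiplicity (int p) d"
      using prime_elem_multiplicity_mult_distrib[OF pe] n0 ab(1) False d0 by simp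
    have mb: "multiplicity (int p) b = 0" using ab(2) by (rule not_dvd_imp_multiplicity_0)
    have ma: "multiplicity (int p) a \<ge> k" using multiplicity_geI[OF False nu ab(3)] .
    have md: "multiplicity (int p) d = 0"
    proof (rule ccontr)
      assume "multiplicity (int p) d \<noteq> 0"
      hence "int p dvd d" using multiplicity_gt_zero_iff[of d "int p"] d0 nu by simp
      moreover have "multiplicity (int p) n > 0" using m mb \<open>multiplicity (int p) d \<noteq> 0\<close> by simp
      hence "int p dvd n" using multiplicity_gt_zero_iff[of n "int p"] n0 nu by simp
      ultimately show False using cop nu coprime_common_divisor[of n d "int p"] by blast
    qed
    show ?thesis unfolding psmall_def rat_pval_def using nd m mb md ma by auto
  qed
qed


context
  fixes p :: nat
  assumes p: "prime p"
begin

lemma pint: "prime (int p)" using p by simp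

lemma ndvd_mult: "\<not> int p dvd b \<Longrightarrow> \<not> int p dvd d \<Longrightarrow> \<not> int p dvd b * d"
  using prime_dvd_mult_iff[OF pint] by blast

lemma rat_rep: obtains a b where "(r::rat) = of_int a / of_int b" "b \<noteq> 0"
proof -
  obtain n d where nd: "quotient_of r = (n, d)" by (cases "quotient_of r") auto
  show ?thesis using that[OF quotient_of_div[OF nd]] quotient_of_denom_pos[OF nd] by simp
qed

lemma ps_zero: "psmall p k 0" by (simp add: psmall_def)

lemma ps_add: assumes "psmall p k x" "psmall p k y" shows "psmall p k (x + y)"
proof -
  obtain a b where ab: "b \<noteq> 0" "\<not> int p dvd b" "int p ^ k dvd a" "x = of_int a / of_int b"
    using iffD1[OF psmall_char[OF p] assms(1)] by blast
  obtain c d where cd: "d \<noteq> 0" "\<not> int p dvd d" "int p ^ k dvd c" "y = of_int c / of_int d"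
    using iffD1[OF psmall_char[OF p] assms(2)] by blast
  have "x + y = of_int (a * d + c * b) / of_int (b * d)" using ab cd by (simp add: field_simps)
  moreover have "\<not> int p dvd b * d" using ab cd by (simp add: ndvd_mult)
  moreover have "int p ^ k dvd a * d + c * b" using ab cd by simp
  moreover have "b * d \<noteq> 0" using ab cd by simp
  ultimately show ?thesis by (intro iffD2[OF psmall_char[OF p]]) blast
qed

lemma ps_neg: assumes "psmall p k x" shows "psmall p k (- x)"
proof -
  obtain a b where ab: "b \<noteq> 0" "\<not> int p dvd b" "int p ^ k dvd a" "x = of_int a / of_int b"
    using iffD1[OF psmall_char[OF p] assms(1)] by blast
  have "- x = of_int (- a) / of_int b" using ab by simp
  moreover have "int p ^ k dvd - a" using ab by simp
  ultimately show ?thesis using ab by (intro iffD2[OF psmall_char[OF p]]) blast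
qed

lemma ps_sub: assumes "psmall p k x" "psmall p k y" shows "psmall p k (x - y)"
  using ps_add[OF assms(1) ps_neg[OF assms(2)]] by simp

lemma ps_mono: assumes "psmall p k x" "k' \<le> k" shows "psmall p k' x"
proof -
  obtain a b where ab: "b \<noteq> 0" "\<not> int p dvd b" "int p ^ k dvd a" "x = of_int a / of_int b"
    using iffD1[OF psmall_char[OF p] assms(1)] by blast
  have "int p ^ k' dvd a" using ab(3) assms(2) by (meson dvd_trans le_imp_power_dvd)
  thus ?thesis using ab by (intro iffD2[OF psmall_char[OF p]]) blast
qed

lemma ps_mul: assumes "psmall p k x" "psmall p k' y" shows "psmall p (k + k') (x * y)"
proof -
  obtain a b where ab: "b \<noteq> 0" "\<not> int p dvd b" "int p ^ k dvd a" "x = of_int a / of_int b"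
    using iffD1[OF psmall_char[OF p] assms(1)] by blast
  obtain c d where cd: "d \<noteq> 0" "\<not> int p dvd d" "int p ^ k' dvd c" "y = of_int c / of_int d"
    using iffD1[OF psmall_char[OF p] assms(2)] by blast
  have "x * y = of_int (a * c) / of_int (b * d)" using ab cd by simp
  moreover have "\<not> int p dvd b * d" using ab cd by (simp add: ndvd_mult)
  moreover have "int p ^ (k + k') dvd a * c" using ab cd by (simp add: power_add mult_dvd_mono)
  moreover have "b * d \<noteq> 0" using ab cd by simp
  ultimately show ?thesis by (intro iffD2[OF psmall_char[OF p]]) blast
qed

lemma ps_int: "psmall p 0 (of_int z)"
proof -
  have "\<not> int p dvd 1" using nu_p[OF p] by simp
  thus ?thesis by (intro iffD2[OF psmall_char[OF p]] exI[of _ z] exI[of _ 1]) auto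
qed

lemma ps_scale: "\<exists>e. \<forall>k x. psmall p (k + e) x \<longrightarrow> psmall p k (x * r)"
proof -
  obtain a b where r: "r = of_int a / of_int b" "b \<noteq> 0"
    using rat_rep by blast
  obtain e b' where b: "b = int p ^ e * b'" "\<not> int p dvd b'" using int_decomp[OF p r(2)] by blast
  have "psmall p k (x * r)" if hx: "psmall p (k + e) x" for k x
  proof -
    obtain c d where cd: "d \<noteq> 0" "\<not> int p dvd d" "int p ^ (k+e) dvd c" "x = of_int c / of_int d"
      using iffD1[OF psmall_char[OF p] hx] by blast
    obtain m where m: "c = int p ^ (k + e) * m" using cd(3) by blast
    have pe0: "int p ^ e \<noteq> 0" using p by (simp add: prime_gt_0_nat)
    have b'0: "b' \<noteq> 0" using b r by auto
    have ca: "c * a = int p ^ e * (int p ^ k * m * a)" using m by (simp add: power_add ac_simps)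
    have db: "d * b = int p ^ e * (d * b')" using b by (simp add: ac_simps)
    have "x * r = of_int (c * a) / of_int (d * b)" using cd r by simp
    also have "\<dots> = of_int (int p ^ e) * of_int (int p ^ k * m * a) / (of_int (int p ^ e) * of_int (d * b'))"
      unfolding ca db of_int_mult by simp
    also have "\<dots> = of_int (int p ^ k * m * a) / of_int (d * b')"
      using pe0 by (intro mult_divide_mult_cancel_left) simp
    finally have "x * r = of_int (int p ^ k * m * a) / of_int (d * b')" .
    moreover have "\<not> int p dvd d * b'" using b cd by (simp add: ndvd_mult)
    moreover have "d * b' \<noteq> 0" using cd b'0 by simp
    moreover have "int p ^ k dvd int p ^ k * m * a" by simp
    ultimately show ?thesis by (intro iffD2[OF psmall_char[OF p]]) blast
  qed
  thus ?thesis by blast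
qed

lemma ps_div: assumes "\<not> psmall p k0 x" "psmall p (k + k0) z" shows "psmall p k (z / x)"
proof -
  have x0: "x \<noteq> 0" using assms(1) ps_zero by auto
  obtain a b where r: "x = of_int a / of_int b" "b \<noteq> 0"
    using rat_rep by blast
  have a0: "a \<noteq> 0" using r x0 by auto
  obtain i a' where a: "a = int p ^ i * a'" "\<not> int p dvd a'" using int_decomp[OF p a0] by blast
  obtain j b' where b: "b = int p ^ j * b'" "\<not> int p dvd b'" using int_decomp[OF p r(2)] by blast
  have pp: "int p \<noteq> 0" using p by (simp add: prime_gt_0_nat)
  have a'0: "a' \<noteq> 0" using a a0 by auto
  have b'0: "b' \<noteq> 0" using b r by auto
  have ij: "i < k0 + j"
  proof (rule ccontr)
    assume "\<not> i < k0 + j"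
    hence ie: "int p ^ i = int p ^ j * int p ^ (i - j)" by (simp add: power_add[symmetric])
    have "x = of_int (int p ^ j * (int p ^ (i - j) * a')) / of_int (int p ^ j * b')"
      using r a b ie by (simp add: ac_simps)
    also have "\<dots> = of_int (int p ^ (i - j) * a') / of_int b'"
      unfolding of_int_mult using pp by (intro mult_divide_mult_cancel_left) simp
    finally have "x = of_int (int p ^ (i - j) * a') / of_int b'" .
    moreover have "int p ^ k0 dvd int p ^ (i - j) * a'" using \<open>\<not> i < k0 + j\<close>
      by (simp add: le_imp_power_dvd)
    ultimately have "psmall p k0 x" using b b'0 by (intro iffD2[OF psmall_char[OF p]]) blast
    thus False using assms(1) by simp
  qed
  obtain c d where cd: "d \<noteq> 0" "\<not> int p dvd d" "int p ^ (k+k0) dvd c" "z = of_int c / of_int d"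
    using iffD1[OF psmall_char[OF p] assms(2)] by blast
  obtain m where m: "c = int p ^ (k + k0) * m" using cd(3) by blast
  have "z / x = of_int (int p ^ (k + (k0 + j - i)) * m * b') / of_int (d * a')"
  proof -
    have e: "k + k0 + j = (k + (k0 + j - i)) + i" using ij by simp
    have "z / x = of_int (int p ^ (k + k0) * m * (int p ^ j * b')) / of_int (d * (int p ^ i * a'))"
      using cd m r a b by simp
    also have "int p ^ (k + k0) * m * (int p ^ j * b') = int p ^ (k + k0 + j) * m * b'"
      by (simp add: power_add)
    also have "\<dots> = int p ^ i * (int p ^ (k + (k0 + j - i)) * m * b')"
      by (subst e) (simp add: power_add)
    finally show ?thesis using pp by simp
  qed
  moreover have "\<not> int p dvd d * a'" using a cd by (simp add: ndvd_mult)
  moreover have "d * a' \<noteq> 0" using cd a'0 by simp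
  moreover have "int p ^ k dvd int p ^ (k + (k0 + j - i)) * m * b'"
    by (simp add: power_add)
  ultimately show ?thesis by (intro iffD2[OF psmall_char[OF p]]) blast
qed

end


context
  fixes p :: nat
  assumes p: "prime p"
begin

lemma null_add: assumes "pnull p X" "pnull p Y" shows "pnull p (\<lambda>n. X n + Y n)"
  unfolding pnull_def
proof
  fix k
  obtain N1 where 1: "\<forall>n\<ge>N1. psmall p k (X n)" using assms(1) unfolding pnull_def by blast
  obtain N2 where 2: "\<forall>n\<ge>N2. psmall p k (Y n)" using assms(2) unfolding pnull_def by blast
  show "\<exists>N. \<forall>n\<ge>N. psmall p k (X n + Y n)"
    using 1 2 ps_add[OF p] by (intro exI[of _ "max N1 N2"]) auto
qed

lemma null_neg: assumes "pnull p X" shows "pnull p (\<lambda>n. - X n)"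
  using assms ps_neg[OF p] unfolding pnull_def by blast

lemma null_sub: assumes "pnull p X" "pnull p Y" shows "pnull p (\<lambda>n. X n - Y n)"
  using null_add[OF assms(1) null_neg[OF assms(2)]] by simp

lemma null_zero: "pnull p (\<lambda>n. 0)"
  unfolding pnull_def using ps_zero[OF p] by blast

lemma null_ev: assumes "pnull p X" "\<forall>n\<ge>N0. Y n = X n" shows "pnull p Y"
  unfolding pnull_def
proof
  fix k
  obtain N1 where 1: "\<forall>n\<ge>N1. psmall p k (X n)" using assms(1) unfolding pnull_def by blast
  show "\<exists>N. \<forall>n\<ge>N. psmall p k (Y n)"
    using 1 assms(2) by (intro exI[of _ "max N1 N0"]) auto
qed

lemma null_const: assumes "pnull p (\<lambda>n. q)" shows "q = 0"
proof (rule ccontr)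
  assume q: "q \<noteq> 0"
  define K where "K = nat (rat_pval p q + 1)"
  have "\<exists>N. \<forall>(n::nat)\<ge>N. psmall p K q" using assms[unfolded pnull_def, rule_format, of K] .
  then obtain N :: nat where "\<forall>(n::nat)\<ge>N. psmall p K q" by blast
  hence "psmall p K q" by blast
  hence "rat_pval p q \<ge> int K" using q unfolding psmall_def by simp
  moreover have "int K = rat_pval p q + 1 \<or> rat_pval p q + 1 < 0" unfolding K_def by linarith
  ultimately show False by linarith
qed

lemma cauchy_add: assumes "pcauchy p X" "pcauchy p Y" shows "pcauchy p (\<lambda>n. X n + Y n)"
  unfolding pcauchy_def
proof
  fix k
  obtain N1 where 1: "\<forall>m\<ge>N1. \<forall>n\<ge>N1. psmall p k (X m - X n)" using assms(1) unfolding pcauchy_def by blast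
  obtain N2 where 2: "\<forall>m\<ge>N2. \<forall>n\<ge>N2. psmall p k (Y m - Y n)" using assms(2) unfolding pcauchy_def by blast
  have "psmall p k (X m + Y m - (X n + Y n))" if "m \<ge> max N1 N2" "n \<ge> max N1 N2" for m n
  proof -
    have "psmall p k ((X m - X n) + (Y m - Y n))" using 1 2 that ps_add[OF p] by simp
    thus ?thesis by (simp add: algebra_simps)
  qed
  thus "\<exists>N. \<forall>m\<ge>N. \<forall>n\<ge>N. psmall p k (X m + Y m - (X n + Y n))" by blast
qed

lemma cauchy_neg: assumes "pcauchy p X" shows "pcauchy p (\<lambda>n. - X n)"
  unfolding pcauchy_def
proof
  fix k
  obtain N1 where 1: "\<forall>m\<ge>N1. \<forall>n\<ge>N1. psmall p k (X m - X n)" using assms(1) unfolding pcauchy_def by blast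
  have "psmall p k (- X m - - X n)" if "m \<ge> N1" "n \<ge> N1" for m n
    using ps_neg[OF p 1[rule_format, OF that]] by simp
  thus "\<exists>N. \<forall>m\<ge>N. \<forall>n\<ge>N. psmall p k (- X m - - X n)" by blast
qed

lemma cauchy_sub: assumes "pcauchy p X" "pcauchy p Y" shows "pcauchy p (\<lambda>n. X n - Y n)"
  using cauchy_add[OF assms(1) cauchy_neg[OF assms(2)]] by simp

lemma cauchy_const: "pcauchy p (\<lambda>n. q)"
  unfolding pcauchy_def using ps_zero[OF p] by simp

lemma null_cauchy: assumes "pnull p X" shows "pcauchy p X"
  unfolding pcauchy_def
proof
  fix k
  obtain N1 where 1: "\<forall>n\<ge>N1. psmall p k (X n)" using assms(1) unfolding pnull_def by blast
  show "\<exists>N. \<forall>m\<ge>N. \<forall>n\<ge>N. psmall p k (X m - X n)"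
    using 1 ps_sub[OF p] by blast
qed

lemma cauchy_bound: assumes "pcauchy p Y"
  shows "\<exists>e N. \<forall>n\<ge>N. \<forall>k x. psmall p (k + e) x \<longrightarrow> psmall p k (x * Y n)"
proof -
  obtain N where N: "\<forall>m\<ge>N. \<forall>n\<ge>N. psmall p 0 (Y m - Y n)" using assms unfolding pcauchy_def by blast
  obtain e where e: "\<forall>k x. psmall p (k + e) x \<longrightarrow> psmall p k (x * Y N)" using ps_scale[OF p] by blast
  have "psmall p k (x * Y n)" if "n \<ge> N" "psmall p (k + e) x" for n k x
  proof -
    have a: "psmall p k (x * Y N)" using e that by blast
    have "psmall p (k + e + 0) (x * (Y n - Y N))" using ps_mul[OF p that(2) N[rule_format, OF that(1) order_refl]] .
    hence b: "psmall p k (x * (Y n - Y N))" using ps_mono[OF p] by (metis add.right_neutral le_add1)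
    have "psmall p k (x * Y N + x * (Y n - Y N))" using ps_add[OF p a b] .
    thus ?thesis by (simp add: algebra_simps)
  qed
  thus ?thesis by blast
qed

lemma null_mul: assumes "pnull p X" "pcauchy p Y" shows "pnull p (\<lambda>n. X n * Y n)"
  unfolding pnull_def
proof
  fix k
  obtain e N where eN: "\<forall>n\<ge>N. \<forall>k x. psmall p (k + e) x \<longrightarrow> psmall p k (x * Y n)"
    using cauchy_bound[OF assms(2)] by blast
  obtain N1 where 1: "\<forall>n\<ge>N1. psmall p (k + e) (X n)" using assms(1) unfolding pnull_def by blast
  show "\<exists>N. \<forall>n\<ge>N. psmall p k (X n * Y n)"
    using 1 eN by (intro exI[of _ "max N N1"]) auto
qed

lemma null_mul': assumes "pcauchy p Y" "pnull p X" shows "pnull p (\<lambda>n. Y n * X n)"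
  using null_mul[OF assms(2,1)] by (simp add: mult.commute)

lemma cauchy_mul: assumes "pcauchy p X" "pcauchy p Y" shows "pcauchy p (\<lambda>n. X n * Y n)"
  unfolding pcauchy_def
proof
  fix k
  obtain eY NY where eY: "\<forall>n\<ge>NY. \<forall>k x. psmall p (k + eY) x \<longrightarrow> psmall p k (x * Y n)"
    using cauchy_bound[OF assms(2)] by blast
  obtain eX NX where eX: "\<forall>n\<ge>NX. \<forall>k x. psmall p (k + eX) x \<longrightarrow> psmall p k (x * X n)"
    using cauchy_bound[OF assms(1)] by blast
  obtain N1 where 1: "\<forall>m\<ge>N1. \<forall>n\<ge>N1. psmall p (k + eY) (X m - X n)" using assms(1) unfolding pcauchy_def by blast
  obtain N2 where 2: "\<forall>m\<ge>N2. \<forall>n\<ge>N2. psmall p (k + eX) (Y m - Y n)" using assms(2) unfolding pcauchy_def by blast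
  define M where "M = max (max NY NX) (max N1 N2)"
  have "psmall p k (X m * Y m - X n * Y n)" if "m \<ge> M" "n \<ge> M" for m n
  proof -
    have a: "psmall p k ((X m - X n) * Y m)" using eY 1 that unfolding M_def by auto
    have b: "psmall p k ((Y m - Y n) * X n)" using eX 2 that unfolding M_def by auto
    have "psmall p k ((X m - X n) * Y m + (Y m - Y n) * X n)" using ps_add[OF p a b] .
    thus ?thesis by (simp add: algebra_simps)
  qed
  thus "\<exists>N. \<forall>m\<ge>N. \<forall>n\<ge>N. psmall p k (X m * Y m - X n * Y n)" by blast
qed

lemma nonnull_ev: assumes "pcauchy p X" "\<not> pnull p X"
  shows "\<exists>k0 N. \<forall>n\<ge>N. \<not> psmall p k0 (X n)"
proof -
  obtain k0 where k0: "\<forall>N. \<exists>n\<ge>N. \<not> psmall p k0 (X n)" using assms(2) unfolding pnull_def by blast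
  obtain N where N: "\<forall>m\<ge>N. \<forall>n\<ge>N. psmall p k0 (X m - X n)" using assms(1) unfolding pcauchy_def by blast
  have "\<not> psmall p k0 (X n)" if "n \<ge> N" for n
  proof
    assume h: "psmall p k0 (X n)"
    obtain m where m: "m \<ge> N" "\<not> psmall p k0 (X m)" using k0 by blast
    have "psmall p k0 (X n + (X m - X n))" using ps_add[OF p h N[rule_format, OF m(1) that]] .
    thus False using m by simp
  qed
  thus ?thesis by blast
qed

lemma cauchy_inv: assumes "pcauchy p X" "\<not> pnull p X" shows "pcauchy p (\<lambda>n. inverse (X n))"
  unfolding pcauchy_def
proof
  fix k
  obtain k0 N0 where k0: "\<forall>n\<ge>N0. \<not> psmall p k0 (X n)" using nonnull_ev[OF assms] by blast
  obtain N1 where 1: "\<forall>m\<ge>N1. \<forall>n\<ge>N1. psmall p (k + k0 + k0) (X m - X n)" using assms(1) unfolding pcauchy_def by blast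
  have "psmall p k (inverse (X m) - inverse (X n))" if "m \<ge> max N0 N1" "n \<ge> max N0 N1" for m n
  proof -
    have xm: "\<not> psmall p k0 (X m)" and xn: "\<not> psmall p k0 (X n)" using k0 that by auto
    have nz: "X m \<noteq> 0" "X n \<noteq> 0" using xm xn ps_zero[OF p] by auto
    have "psmall p ((k + k0) + k0) (X n - X m)" using 1 that by auto
    hence "psmall p (k + k0) ((X n - X m) / X m)" by (rule ps_div[OF p xm])
    hence "psmall p k ((X n - X m) / X m / X n)" by (rule ps_div[OF p xn])
    moreover have "(X n - X m) / X m / X n = inverse (X m) - inverse (X n)" using nz
      by (simp add: field_simps)
    ultimately show ?thesis by simp
  qed
  thus "\<exists>N. \<forall>m\<ge>N. \<forall>n\<ge>N. psmall p k (inverse (X m) - inverse (X n))" by blast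
qed

lemma null_inv: assumes "pcauchy p X" "\<not> pnull p X" shows "pnull p (\<lambda>n. X n * inverse (X n) - 1)"
proof -
  obtain k0 N0 where k0: "\<forall>n\<ge>N0. \<not> psmall p k0 (X n)" using nonnull_ev[OF assms] by blast
  have "\<forall>n\<ge>N0. X n * inverse (X n) - 1 = 0"
  proof (intro allI impI)
    fix n assume "n \<ge> N0"
    hence "\<not> psmall p k0 (X n)" using k0 by blast
    hence "X n \<noteq> 0" using ps_zero[OF p, of k0] by auto
    thus "X n * inverse (X n) - 1 = 0" by simp
  qed
  thus ?thesis by (intro null_ev[OF null_zero, of N0]) simp
qed

lemma nonnull_mul: assumes "pcauchy p X" "pcauchy p Y" "\<not> pnull p X" "\<not> pnull p Y"
  shows "\<not> pnull p (\<lambda>n. X n * Y n)"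
proof
  assume h: "pnull p (\<lambda>n. X n * Y n)"
  have a: "pnull p (\<lambda>n. (X n * Y n) * inverse (X n))" using null_mul[OF h cauchy_inv[OF assms(1,3)]] .
  have b: "pnull p (\<lambda>n. Y n * (X n * inverse (X n) - 1))" using null_mul'[OF assms(2) null_inv[OF assms(1,3)]] .
  have "pnull p (\<lambda>n. (X n * Y n) * inverse (X n) - Y n * (X n * inverse (X n) - 1))" using null_sub[OF a b] .
  moreover have "(\<lambda>n. (X n * Y n) * inverse (X n) - Y n * (X n * inverse (X n) - 1)) = Y"
    by (rule ext) (simp add: algebra_simps)
  ultimately show False using assms(4) by simp
qed

end


context
  fixes p :: nat
  assumes p: "prime p"
begin

lemma cls_eq: assumes "pcauchy p X" "pcauchy p Y"
  shows "qp_cls p X = qp_cls p Y \<longleftrightarrow> pnull p (\<lambda>n. X n - Y n)"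
proof
  assume h: "qp_cls p X = qp_cls p Y"
  have "Y \<in> qp_cls p Y" unfolding qp_cls_def using assms(2) null_zero[OF p] by simp
  hence "Y \<in> qp_cls p X" using h by simp
  thus "pnull p (\<lambda>n. X n - Y n)" unfolding qp_cls_def by simp
next
  assume h: "pnull p (\<lambda>n. X n - Y n)"
  have 1: "pnull p (\<lambda>n. Y n - Z n)" if "pnull p (\<lambda>n. X n - Z n)" for Z
    using null_sub[OF p that h] by simp
  have 2: "pnull p (\<lambda>n. X n - Z n)" if "pnull p (\<lambda>n. Y n - Z n)" for Z
    using null_add[OF p that h] by simp
  show "qp_cls p X = qp_cls p Y" unfolding qp_cls_def using 1 2 by blast
qed

lemma cls_mem: "pcauchy p X \<Longrightarrow> qp_cls p X \<in> Qp p"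
  unfolding Qp_def by blast

lemma rep_cls: assumes "pcauchy p X"
  shows "pcauchy p (qp_rep (qp_cls p X)) \<and> pnull p (\<lambda>n. X n - qp_rep (qp_cls p X) n)"
proof -
  have "X \<in> qp_cls p X" unfolding qp_cls_def using assms null_zero[OF p] by simp
  hence "qp_rep (qp_cls p X) \<in> qp_cls p X" unfolding qp_rep_def by (rule someI[where P="\<lambda>Y. Y \<in> qp_cls p X"])
  thus ?thesis unfolding qp_cls_def by simp
qed

lemma Qp_rep: assumes "a \<in> Qp p" shows "pcauchy p (qp_rep a) \<and> qp_cls p (qp_rep a) = a"
proof -
  obtain X where X: "pcauchy p X" "a = qp_cls p X" using assms unfolding Qp_def by blast
  have r: "pcauchy p (qp_rep a)" "pnull p (\<lambda>n. X n - qp_rep a n)" using rep_cls[OF X(1)] X(2) by auto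
  have "qp_cls p X = qp_cls p (qp_rep a)" using cls_eq[OF X(1) r(1)] r(2) by simp
  thus ?thesis using X r by simp
qed

lemma Qp_cases: assumes "a \<in> Qp p" obtains X where "pcauchy p X" "a = qp_cls p X"
  using assms unfolding Qp_def by blast

lemma add_cls: assumes "pcauchy p X" "pcauchy p Y"
  shows "qp_add p (qp_cls p X) (qp_cls p Y) = qp_cls p (\<lambda>n. X n + Y n)"
proof -
  define R where "R = qp_rep (qp_cls p X)"
  define S where "S = qp_rep (qp_cls p Y)"
  have R: "pcauchy p R" "pnull p (\<lambda>n. X n - R n)" using rep_cls[OF assms(1)] unfolding R_def by auto
  have S: "pcauchy p S" "pnull p (\<lambda>n. Y n - S n)" using rep_cls[OF assms(2)] unfolding S_def by auto
  have "pnull p (\<lambda>n. (R n + S n) - (X n + Y n))"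
    using null_neg[OF p null_add[OF p R(2) S(2)]] by (simp add: algebra_simps)
  hence "qp_cls p (\<lambda>n. R n + S n) = qp_cls p (\<lambda>n. X n + Y n)"
    using cls_eq[OF cauchy_add[OF p R(1) S(1)] cauchy_add[OF p assms]] by simp
  thus ?thesis unfolding qp_add_def R_def S_def .
qed

lemma mul_cls: assumes "pcauchy p X" "pcauchy p Y"
  shows "qp_mul p (qp_cls p X) (qp_cls p Y) = qp_cls p (\<lambda>n. X n * Y n)"
proof -
  define R where "R = qp_rep (qp_cls p X)"
  define S where "S = qp_rep (qp_cls p Y)"
  have R: "pcauchy p R" "pnull p (\<lambda>n. X n - R n)" using rep_cls[OF assms(1)] unfolding R_def by auto
  have S: "pcauchy p S" "pnull p (\<lambda>n. Y n - S n)" using rep_cls[OF assms(2)] unfolding S_def by auto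
  have a: "pnull p (\<lambda>n. R n * (Y n - S n))" by (rule null_mul'[OF p R(1) S(2)])
  have b: "pnull p (\<lambda>n. (X n - R n) * Y n)" by (rule null_mul[OF p R(2) assms(2)])
  have "pnull p (\<lambda>n. - (R n * (Y n - S n) + (X n - R n) * Y n))" using null_neg[OF p null_add[OF p a b]] .
  hence "pnull p (\<lambda>n. R n * S n - X n * Y n)" by (simp add: algebra_simps)
  hence "qp_cls p (\<lambda>n. R n * S n) = qp_cls p (\<lambda>n. X n * Y n)"
    using cls_eq[OF cauchy_mul[OF p R(1) S(1)] cauchy_mul[OF p assms]] by simp
  thus ?thesis unfolding qp_mul_def R_def S_def .
qed

lemma neg_cls: assumes "pcauchy p X"
  shows "qp_neg p (qp_cls p X) = qp_cls p (\<lambda>n. - X n)"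
proof -
  define R where "R = qp_rep (qp_cls p X)"
  have R: "pcauchy p R" "pnull p (\<lambda>n. X n - R n)" using rep_cls[OF assms(1)] unfolding R_def by auto
  have "pnull p (\<lambda>n. - R n - - X n)" using R(2) by simp
  hence "qp_cls p (\<lambda>n. - R n) = qp_cls p (\<lambda>n. - X n)"
    using cls_eq[OF cauchy_neg[OF p R(1)] cauchy_neg[OF p assms]] by simp
  thus ?thesis unfolding qp_neg_def R_def .
qed

lemma sub_cls: assumes "pcauchy p X" "pcauchy p Y"
  shows "qp_sub p (qp_cls p X) (qp_cls p Y) = qp_cls p (\<lambda>n. X n - Y n)"
  unfolding qp_sub_def neg_cls[OF assms(2)] add_cls[OF assms(1) cauchy_neg[OF p assms(2)]] by simp

lemma cls_zero_iff: assumes "pcauchy p X" shows "qp_cls p X = qp_zero p \<longleftrightarrow> pnull p X"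
  unfolding qp_zero_def qp_of_int_def using cls_eq[OF assms cauchy_const[OF p]] by simp

lemma of_int_cls: "qp_of_int p z = qp_cls p (\<lambda>n. of_int z)"
  unfolding qp_of_int_def ..

lemma of_int_inj: "qp_of_int p z = qp_of_int p w \<longleftrightarrow> z = w"
proof
  assume "qp_of_int p z = qp_of_int p w"
  hence "pnull p (\<lambda>n. of_int z - of_int w)" unfolding qp_of_int_def
    using cls_eq[OF cauchy_const[OF p] cauchy_const[OF p]] by simp
  hence "(of_int z - of_int w :: rat) = 0" by (rule null_const[OF p])
  thus "z = w" by simp
qed simp

lemma of_int_nz: "z \<noteq> 0 \<Longrightarrow> qp_of_int p z \<noteq> qp_zero p"
  unfolding qp_zero_def using of_int_inj by simp

end


type_synonym seq = "nat \<Rightarrow> rat"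
type_synonym seq4 = "seq \<times> seq \<times> seq \<times> seq"

fun qc :: "nat \<Rightarrow> seq4 \<Rightarrow> qpmat" where
  "qc p (A, B, C, D) = (qp_cls p A, qp_cls p B, qp_cls p C, qp_cls p D)"
fun sc4 :: "nat \<Rightarrow> seq4 \<Rightarrow> bool" where
  "sc4 p (A, B, C, D) = (pcauchy p A \<and> pcauchy p B \<and> pcauchy p C \<and> pcauchy p D)"
fun smul :: "seq4 \<Rightarrow> seq4 \<Rightarrow> seq4" where
  "smul (A, B, C, D) (E, F, G, H) = (\<lambda>n. A n * E n + B n * G n, \<lambda>n. A n * F n + B n * H n,
      \<lambda>n. C n * E n + D n * G n, \<lambda>n. C n * F n + D n * H n)"
fun sscale :: "seq \<Rightarrow> seq4 \<Rightarrow> seq4" where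
  "sscale T (A, B, C, D) = (\<lambda>n. T n * A n, \<lambda>n. T n * B n, \<lambda>n. T n * C n, \<lambda>n. T n * D n)"
fun sdet :: "seq4 \<Rightarrow> seq" where
  "sdet (A, B, C, D) = (\<lambda>n. A n * D n - B n * C n)"
fun snull4 :: "nat \<Rightarrow> seq4 \<Rightarrow> seq4 \<Rightarrow> bool" where
  "snull4 p (A, B, C, D) (E, F, G, H) = (pnull p (\<lambda>n. A n - E n) \<and> pnull p (\<lambda>n. B n - F n) \<and>
      pnull p (\<lambda>n. C n - G n) \<and> pnull p (\<lambda>n. D n - H n))"

context
  fixes p :: nat
  assumes p: "prime p"
begin

lemma sc4_smul: "sc4 p M \<Longrightarrow> sc4 p N \<Longrightarrow> sc4 p (smul M N)"
  by (cases M, cases N) (auto intro!: cauchy_add[OF p] cauchy_mul[OF p])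

lemma sc4_sscale: "pcauchy p T \<Longrightarrow> sc4 p M \<Longrightarrow> sc4 p (sscale T M)"
  by (cases M) (auto intro!: cauchy_mul[OF p])

lemma m2_mul_qc: "sc4 p M \<Longrightarrow> sc4 p N \<Longrightarrow> m2_mul p (qc p M) (qc p N) = qc p (smul M N)"
  by (cases M, cases N) (simp add: mul_cls[OF p] add_cls[OF p] cauchy_mul[OF p])

lemma m2_scale_qc: "pcauchy p T \<Longrightarrow> sc4 p M \<Longrightarrow> m2_scale p (qp_cls p T) (qc p M) = qc p (sscale T M)"
  by (cases M) (simp add: mul_cls[OF p])

lemma m2_det_qc: "sc4 p M \<Longrightarrow> m2_det p (qc p M) = qp_cls p (sdet M)"
  by (cases M) (simp add: mul_cls[OF p] sub_cls[OF p] cauchy_mul[OF p])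

lemma cauchy_sdet: "sc4 p M \<Longrightarrow> pcauchy p (sdet M)"
  by (cases M) (simp add: cauchy_mul[OF p] cauchy_sub[OF p])

lemma qc_eq: "sc4 p M \<Longrightarrow> sc4 p N \<Longrightarrow> qc p M = qc p N \<longleftrightarrow> snull4 p M N"
  by (cases M, cases N) (simp add: cls_eq[OF p])

lemma GL2_qc: assumes M: "sc4 p M" shows "qc p M \<in> GL2 p \<longleftrightarrow> \<not> pnull p (sdet M)"
proof -
  obtain A B C D where MM: "M = (A, B, C, D)" by (cases M)
  have c: "qp_cls p A \<in> Qp p" "qp_cls p B \<in> Qp p" "qp_cls p C \<in> Qp p" "qp_cls p D \<in> Qp p"
    using M MM cls_mem[OF p] by auto
  have "qc p M \<in> GL2 p \<longleftrightarrow> m2_det p (qc p M) \<noteq> qp_zero p"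
    unfolding MM GL2_def qc.simps using c by (simp del: m2_det.simps)
  also have "\<dots> \<longleftrightarrow> \<not> pnull p (sdet M)"
    using m2_det_qc[OF M] cls_zero_iff[OF p cauchy_sdet[OF M]] by simp
  finally show ?thesis .
qed

lemma GL2_cases: assumes "X \<in> GL2 p" obtains M where "sc4 p M" "X = qc p M"
proof -
  obtain a b c d where X: "X = (a, b, c, d)" "a \<in> Qp p" "b \<in> Qp p" "c \<in> Qp p" "d \<in> Qp p"
    using assms unfolding GL2_def by auto
  let ?M = "(qp_rep a, qp_rep b, qp_rep c, qp_rep d)"
  have "sc4 p ?M" "X = qc p ?M" using X Qp_rep[OF p] by auto
  thus ?thesis using that by blast
qed

lemma one_cls: "qp_one p = qp_cls p (\<lambda>n. 1)"
  unfolding qp_one_def qp_of_int_def by simp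

lemma one_Qp: "qp_one p \<in> Qp p" "qp_one p \<noteq> qp_zero p"
  using cls_mem[OF p cauchy_const[OF p]] of_int_nz[OF p, of 1]
  unfolding one_cls by (auto simp: qp_one_def qp_of_int_def)

lemma pgl_self: assumes "X \<in> GL2 p" shows "X \<in> pgl_cls p X"
proof -
  obtain M where M: "sc4 p M" "X = qc p M" using GL2_cases[OF assms] by blast
  have "m2_scale p (qp_one p) X = qc p (sscale (\<lambda>n. 1) M)"
    unfolding one_cls M(2) by (rule m2_scale_qc[OF cauchy_const[OF p] M(1)])
  also have "sscale (\<lambda>n. 1) M = M" by (cases M) simp
  finally show ?thesis unfolding pgl_cls_def using assms one_Qp M by auto
qed

lemma nonnull_inv: assumes "pcauchy p T" "\<not> pnull p T" shows "\<not> pnull p (\<lambda>n. inverse (T n))"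
proof
  assume h: "pnull p (\<lambda>n. inverse (T n))"
  have a: "pnull p (\<lambda>n. T n * inverse (T n))" using null_mul'[OF p assms(1) h] .
  have "pnull p (\<lambda>n. T n * inverse (T n) - (T n * inverse (T n) - 1))"
    using null_sub[OF p a null_inv[OF p assms]] .
  hence "pnull p (\<lambda>n. 1)" by simp
  hence "(1::rat) = 0" by (rule null_const[OF p])
  thus False by simp
qed

lemma pgl_scale: assumes t: "t \<in> Qp p" "t \<noteq> qp_zero p" and X: "X \<in> GL2 p"
  shows "pgl_cls p (m2_scale p t X) = pgl_cls p X"
proof -
  obtain M where M: "sc4 p M" "X = qc p M" using GL2_cases[OF X] by blast
  obtain T where T: "pcauchy p T" "t = qp_cls p T" using Qp_cases[OF p t(1)] by blast
  have Tn: "\<not> pnull p T" using t(2) cls_zero_iff[OF p T(1)] T(2) by simp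
  have tX: "m2_scale p t X = qc p (sscale T M)" unfolding T(2) M(2) by (rule m2_scale_qc[OF T(1) M(1)])
  have 1: "N \<in> pgl_cls p X" if hN: "N \<in> pgl_cls p (m2_scale p t X)" for N
  proof -
    obtain s where s: "s \<in> Qp p" "s \<noteq> qp_zero p" "N = m2_scale p s (m2_scale p t X)" "N \<in> GL2 p"
      using hN unfolding pgl_cls_def by blast
    obtain S where S: "pcauchy p S" "s = qp_cls p S" using Qp_cases[OF p s(1)] by blast
    have Sn: "\<not> pnull p S" using s(2) cls_zero_iff[OF p S(1)] S(2) by simp
    have ST: "pcauchy p (\<lambda>n. S n * T n)" using cauchy_mul[OF p S(1) T(1)] .
    have "N = qc p (sscale S (sscale T M))" unfolding s(3) tX S(2)
      by (rule m2_scale_qc[OF S(1) sc4_sscale[OF T(1) M(1)]])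
    also have "sscale S (sscale T M) = sscale (\<lambda>n. S n * T n) M" by (cases M) (simp add: mult.assoc)
    also have "qc p \<dots> = m2_scale p (qp_cls p (\<lambda>n. S n * T n)) X"
      unfolding M(2) by (rule m2_scale_qc[OF ST M(1), symmetric])
    finally have "N = m2_scale p (qp_cls p (\<lambda>n. S n * T n)) X" .
    moreover have "qp_cls p (\<lambda>n. S n * T n) \<in> Qp p" using cls_mem[OF p ST] .
    moreover have "qp_cls p (\<lambda>n. S n * T n) \<noteq> qp_zero p"
      using cls_zero_iff[OF p ST] nonnull_mul[OF p S(1) T(1) Sn Tn] by simp
    ultimately show ?thesis unfolding pgl_cls_def using s(4) by blast
  qed
  have 2: "N \<in> pgl_cls p (m2_scale p t X)" if hN: "N \<in> pgl_cls p X" for N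
  proof -
    obtain s where s: "s \<in> Qp p" "s \<noteq> qp_zero p" "N = m2_scale p s X" "N \<in> GL2 p"
      using hN unfolding pgl_cls_def by blast
    obtain S where S: "pcauchy p S" "s = qp_cls p S" using Qp_cases[OF p s(1)] by blast
    have Sn: "\<not> pnull p S" using s(2) cls_zero_iff[OF p S(1)] S(2) by simp
    define U where "U = (\<lambda>n. S n * inverse (T n))"
    have Ti: "pcauchy p (\<lambda>n. inverse (T n))" using cauchy_inv[OF p T(1) Tn] .
    have U: "pcauchy p U" unfolding U_def using cauchy_mul[OF p S(1) Ti] .
    have Un: "\<not> pnull p U" unfolding U_def using nonnull_mul[OF p S(1) Ti Sn nonnull_inv[OF T(1) Tn]] .
    have N: "N = qc p (sscale S M)" unfolding s(3) S(2) M(2) by (rule m2_scale_qc[OF S(1) M(1)])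
    have UtX: "m2_scale p (qp_cls p U) (m2_scale p t X) = qc p (sscale U (sscale T M))"
      unfolding tX by (rule m2_scale_qc[OF U sc4_sscale[OF T(1) M(1)]])
    have key: "pnull p (\<lambda>n. S n * A n - U n * (T n * A n))" if "pcauchy p A" for A
    proof -
      have "pnull p (\<lambda>n. (S n * A n) * (T n * inverse (T n) - 1))"
        using null_mul'[OF p cauchy_mul[OF p S(1) that] null_inv[OF p T(1) Tn]] .
      hence "pnull p (\<lambda>n. - ((S n * A n) * (T n * inverse (T n) - 1)))" by (rule null_neg[OF p])
      moreover have "(\<lambda>n. - ((S n * A n) * (T n * inverse (T n) - 1))) = (\<lambda>n. S n * A n - U n * (T n * A n))"
        unfolding U_def by (rule ext) (simp add: algebra_simps)
      ultimately show ?thesis by simp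
    qed
    have "snull4 p (sscale S M) (sscale U (sscale T M))"
      using M(1) key by (cases M) simp
    hence "N = m2_scale p (qp_cls p U) (m2_scale p t X)" unfolding N UtX
      using qc_eq[OF sc4_sscale[OF S(1) M(1)] sc4_sscale[OF U sc4_sscale[OF T(1) M(1)]]] by simp
    moreover have "qp_cls p U \<in> Qp p" using cls_mem[OF p U] .
    moreover have "qp_cls p U \<noteq> qp_zero p" using cls_zero_iff[OF p U] Un by simp
    ultimately show ?thesis unfolding pgl_cls_def using s(4) by blast
  qed
  show ?thesis using 1 2 by blast
qed

lemma sdet_smul: "sdet (smul M N) = (\<lambda>n. sdet M n * sdet N n)"
  by (cases M, cases N) (simp add: algebra_simps)

lemma GL2_mul: assumes "X \<in> GL2 p" "Y \<in> GL2 p" shows "m2_mul p X Y \<in> GL2 p"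
proof -
  obtain M where M: "sc4 p M" "X = qc p M" using GL2_cases[OF assms(1)] by blast
  obtain N where N: "sc4 p N" "Y = qc p N" using GL2_cases[OF assms(2)] by blast
  have a: "\<not> pnull p (sdet M)" "\<not> pnull p (sdet N)" using GL2_qc M N assms by auto
  have "\<not> pnull p (\<lambda>n. sdet M n * sdet N n)"
    using nonnull_mul[OF p cauchy_sdet[OF M(1)] cauchy_sdet[OF N(1)] a] .
  thus ?thesis unfolding M(2) N(2) m2_mul_qc[OF M(1) N(1)]
    using GL2_qc[OF sc4_smul[OF M(1) N(1)]] sdet_smul by simp
qed

lemma pgl_mul_cls: assumes X: "X \<in> GL2 p" and Y: "Y \<in> GL2 p"
  shows "pgl_mul p (pgl_cls p X) (pgl_cls p Y) = pgl_cls p (m2_mul p X Y)"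
proof -
  define X' where "X' = (SOME M. M \<in> pgl_cls p X)"
  define Y' where "Y' = (SOME M. M \<in> pgl_cls p Y)"
  have "X' \<in> pgl_cls p X" unfolding X'_def using pgl_self[OF X] by (rule someI)
  then obtain t where t: "t \<in> Qp p" "t \<noteq> qp_zero p" "X' = m2_scale p t X" unfolding pgl_cls_def by blast
  have "Y' \<in> pgl_cls p Y" unfolding Y'_def using pgl_self[OF Y] by (rule someI)
  then obtain s where s: "s \<in> Qp p" "s \<noteq> qp_zero p" "Y' = m2_scale p s Y" unfolding pgl_cls_def by blast
  obtain M where M: "sc4 p M" "X = qc p M" using GL2_cases[OF X] by blast
  obtain N where N: "sc4 p N" "Y = qc p N" using GL2_cases[OF Y] by blast
  obtain T where T: "pcauchy p T" "t = qp_cls p T" using Qp_cases[OF p t(1)] by blast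
  obtain S where S: "pcauchy p S" "s = qp_cls p S" using Qp_cases[OF p s(1)] by blast
  have Tn: "\<not> pnull p T" using t(2) cls_zero_iff[OF p T(1)] T(2) by simp
  have Sn: "\<not> pnull p S" using s(2) cls_zero_iff[OF p S(1)] S(2) by simp
  have TS: "pcauchy p (\<lambda>n. T n * S n)" using cauchy_mul[OF p T(1) S(1)] .
  have "m2_mul p X' Y' = qc p (smul (sscale T M) (sscale S N))"
    unfolding t(3) s(3) T(2) S(2) M(2) N(2) m2_scale_qc[OF T(1) M(1)] m2_scale_qc[OF S(1) N(1)]
    by (rule m2_mul_qc[OF sc4_sscale[OF T(1) M(1)] sc4_sscale[OF S(1) N(1)]])
  also have "smul (sscale T M) (sscale S N) = sscale (\<lambda>n. T n * S n) (smul M N)"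
    by (cases M, cases N) (simp add: algebra_simps)
  also have "qc p \<dots> = m2_scale p (qp_cls p (\<lambda>n. T n * S n)) (m2_mul p X Y)"
    unfolding M(2) N(2) m2_mul_qc[OF M(1) N(1)] by (rule m2_scale_qc[OF TS sc4_smul[OF M(1) N(1)], symmetric])
  finally have e: "m2_mul p X' Y' = m2_scale p (qp_cls p (\<lambda>n. T n * S n)) (m2_mul p X Y)" .
  have "qp_cls p (\<lambda>n. T n * S n) \<in> Qp p" using cls_mem[OF p TS] .
  moreover have "qp_cls p (\<lambda>n. T n * S n) \<noteq> qp_zero p"
    using cls_zero_iff[OF p TS] nonnull_mul[OF p T(1) S(1) Tn Sn] by simp
  ultimately have "pgl_cls p (m2_mul p X' Y') = pgl_cls p (m2_mul p X Y)"
    unfolding e by (rule pgl_scale[OF _ _ GL2_mul[OF X Y]])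
  thus ?thesis unfolding pgl_mul_def X'_def Y'_def .
qed

lemma pgl_eq: assumes "X \<in> GL2 p" "pgl_cls p X = pgl_cls p Y"
  shows "\<exists>t. t \<in> Qp p \<and> t \<noteq> qp_zero p \<and> X = m2_scale p t Y"
proof -
  have "X \<in> pgl_cls p Y" using pgl_self[OF assms(1)] assms(2) by simp
  thus ?thesis unfolding pgl_cls_def by blast
qed

end


fun qmul :: "quat \<Rightarrow> quat \<Rightarrow> quat" where
  "qmul (a0, a1, a2, a3) (b0, b1, b2, b3) =
    (a0*b0 - a1*b1 - a2*b2 - a3*b3, a0*b1 + a1*b0 + a2*b3 - a3*b2,
     a0*b2 - a1*b3 + a2*b0 + a3*b1, a0*b3 + a1*b2 - a2*b1 + a3*b0)"

fun qconj :: "quat \<Rightarrow> quat" where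
  "qconj (x0, x1, x2, x3) = (x0, - x1, - x2, - x3)"

fun qprop :: "quat \<Rightarrow> quat \<Rightarrow> bool" where
  "qprop (x0, x1, x2, x3) (y0, y1, y2, y3) = (y0*x1 = x0*y1 \<and> y0*x2 = x0*y2 \<and> y0*x3 = x0*y3)"

fun qre :: "quat \<Rightarrow> int" where "qre (x0, x1, x2, x3) = x0"

fun qsc :: "int \<Rightarrow> quat \<Rightarrow> quat" where
  "qsc m (x0, x1, x2, x3) = (m*x0, m*x1, m*x2, m*x3)"

lemma qmul_assoc: "qmul (qmul x y) z = qmul x (qmul y z)"
  by (cases x, cases y, cases z) (simp add: algebra_simps)

lemma qnorm_mul: "qnorm (qmul x y) = qnorm x * qnorm y"
  by (cases x, cases y) (simp add: algebra_simps power2_eq_square)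

lemma qmul_conj: "qmul x (qconj x) = (qnorm x, 0, 0, 0)" "qmul (qconj x) x = (qnorm x, 0, 0, 0)"
  by (cases x, simp add: algebra_simps power2_eq_square)+

lemma qmul_one: "qmul x (1, 0, 0, 0) = x" "qmul (1, 0, 0, 0) x = x"
  by (cases x, simp)+

lemma qnorm_conj: "qnorm (qconj x) = qnorm x" by (cases x) simp

lemma qre_comm: "qre (qmul x y) = qre (qmul y x)"
  by (cases x, cases y) (simp add: algebra_simps)

lemma qnorm_pos: "qre x \<noteq> 0 \<Longrightarrow> qnorm x \<noteq> 0"
  by (cases x) (simp add: add_nonneg_eq_0_iff)

lemma qprop_eq: assumes "qprop x y" "qre x = qre y" "qre x \<noteq> 0" shows "x = y"
  using assms by (cases x, cases y) auto

lemma qprop_one: "qprop x (1, 0, 0, 0) \<longleftrightarrow> (\<exists>r. x = (r, 0, 0, 0))"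
  by (cases x) auto

lemma sq3: "(x::int)*x + y*y + z*z = 0 \<Longrightarrow> x = 0 \<and> y = 0 \<and> z = 0"
proof -
  assume h: "x*x + y*y + z*z = 0"
  have "x*x \<ge> 0" "y*y \<ge> 0" "z*z \<ge> 0" by simp_all
  hence "x*x = 0" "y*y = 0" "z*z = 0" using h by linarith+
  thus ?thesis by simp
qed

lemma comm_conj: assumes "qmul z a = qmul a z" shows "qmul (qconj z) a = qmul a (qconj z)"
  using assms by (cases z, cases a) (simp add: algebra_simps)

lemma comm_trans:
  assumes "qmul z a = qmul a z" "qmul w a = qmul a w"
    and "a = (a0, u1, u2, u3)" "(u1, u2, u3) \<noteq> (0, 0, 0)"
  shows "qmul z w = qmul w z"
proof -
  obtain z0 z1 z2 z3 where z: "z = (z0, z1, z2, z3)" by (cases z) auto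
  obtain w0 w1 w2 w3 where w: "w = (w0, w1, w2, w3)" by (cases w) auto
  have zc: "z2*u3 - z3*u2 = 0" "z3*u1 - z1*u3 = 0" "z1*u2 - z2*u1 = 0"
    using assms(1) unfolding z assms(3) by (simp_all add: algebra_simps)
  have wc: "w2*u3 - w3*u2 = 0" "w3*u1 - w1*u3 = 0" "w1*u2 - w2*u1 = 0"
    using assms(2) unfolding w assms(3) by (simp_all add: algebra_simps)
  define U where "U = u1*u1 + u2*u2 + u3*u3"
  define zu where "zu = z1*u1 + z2*u2 + z3*u3"
  define wu where "wu = w1*u1 + w2*u2 + w3*u3"
  have U0: "U \<noteq> 0" using assms(4) sq3 unfolding U_def by blast
  have zz: "U*z1 = zu*u1" "U*z2 = zu*u2" "U*z3 = zu*u3"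
    using zc unfolding U_def zu_def by algebra+
  have ww: "U*w1 = wu*u1" "U*w2 = wu*u2" "U*w3 = wu*u3"
    using wc unfolding U_def wu_def by algebra+
  have "U*U*(z2*w3 - z3*w2) = (U*z2)*(U*w3) - (U*z3)*(U*w2)" by algebra
  hence "U*U*(z2*w3 - z3*w2) = 0" unfolding zz ww by algebra
  hence 1: "z2*w3 = z3*w2" using U0 by simp
  have "U*U*(z3*w1 - z1*w3) = (U*z3)*(U*w1) - (U*z1)*(U*w3)" by algebra
  hence "U*U*(z3*w1 - z1*w3) = 0" unfolding zz ww by algebra
  hence 2: "z3*w1 = z1*w3" using U0 by simp
  have "U*U*(z1*w2 - z2*w1) = (U*z1)*(U*w2) - (U*z2)*(U*w1)" by algebra
  hence "U*U*(z1*w2 - z2*w1) = 0" unfolding zz ww by algebra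
  hence 3: "z1*w2 = z2*w1" using U0 by simp
  show ?thesis unfolding z w using 1 2 3 by (simp add: algebra_simps)
qed

lemma conj_comm:
  assumes "qmul (qmul (qmul g a) (qconj g)) a = qmul a (qmul (qmul g a) (qconj g))"
    and "qre g \<noteq> 0"
  shows "qmul g a = qmul a g"
proof -
  obtain s v1 v2 v3 where g: "g = (s, v1, v2, v3)" by (cases g) auto
  obtain a0 u1 u2 u3 where a: "a = (a0, u1, u2, u3)" by (cases a) auto
  define d1 where "d1 = v2*u3 - v3*u2"
  define d2 where "d2 = v3*u1 - v1*u3"
  define d3 where "d3 = v1*u2 - v2*u1"
  define b where "b = qmul (qmul g a) (qconj g)"
  obtain b0 b1 b2 b3 where bb: "b = (b0, b1, b2, b3)" by (cases b) auto
  have "qmul b a = qmul a b" using assms(1) unfolding b_def .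
  hence bc: "b2*u3 - b3*u2 = 0" "b3*u1 - b1*u3 = 0" "b1*u2 - b2*u1 = 0"
    unfolding bb a by (simp_all add: algebra_simps)
  have bdef: "b1 = (s*s - v1*v1 - v2*v2 - v3*v3)*u1 + 2*s*d1 + 2*(v1*u1+v2*u2+v3*u3)*v1"
             "b2 = (s*s - v1*v1 - v2*v2 - v3*v3)*u2 + 2*s*d2 + 2*(v1*u1+v2*u2+v3*u3)*v2"
             "b3 = (s*s - v1*v1 - v2*v2 - v3*v3)*u3 + 2*s*d3 + 2*(v1*u1+v2*u2+v3*u3)*v3"
    using bb unfolding b_def g a d1_def d2_def d3_def by (simp_all add: algebra_simps)
  have "v1*(b2*u3 - b3*u2) + v2*(b3*u1 - b1*u3) + v3*(b1*u2 - b2*u1) = -2*s*(d1*d1 + d2*d2 + d3*d3)"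
    unfolding bdef d1_def d2_def d3_def by algebra
  hence "s*(d1*d1 + d2*d2 + d3*d3) = 0" using bc by simp
  hence "d1*d1 + d2*d2 + d3*d3 = 0" using assms(2) g by simp
  hence "d1 = 0 \<and> d2 = 0 \<and> d3 = 0" by (rule sq3)
  thus ?thesis unfolding g a d1_def d2_def d3_def by (simp add: algebra_simps)
qed


lemma odd_mod4: "odd (n::int) \<Longrightarrow> n mod 4 = 1 \<or> n mod 4 = 3"
  by presburger

lemma tg_norm: "x \<in> tildeGamma p l \<Longrightarrow> \<exists>r s. qnorm x = int p ^ r * int l ^ s"
  unfolding tildeGamma_def by (cases x) auto

lemma tg_re: assumes "x \<in> tildeGamma p l" "odd p" "odd l" shows "odd (qre x)"
proof -
  obtain x0 x1 x2 x3 where x: "x = (x0, x1, x2, x3)" by (cases x) auto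
  obtain r s where rs: "qnorm x = int p ^ r * int l ^ s" using tg_norm[OF assms(1)] by blast
  have "odd (qnorm x)" unfolding rs using assms(2,3) by simp
  hence "qnorm x mod 4 = 1 \<or> qnorm x mod 4 = 3" by (rule odd_mod4)
  thus ?thesis using assms(1) unfolding x tildeGamma_def by auto
qed

lemma tg_one: "(1, 0, 0, 0) \<in> tildeGamma p l"
proof -
  have "\<exists>r s. int p ^ r * int l ^ s = 1" by (intro exI[of _ 0]) simp
  thus ?thesis unfolding tildeGamma_def by simp
qed

lemma tg_conj: assumes "x \<in> tildeGamma p l" shows "qconj x \<in> tildeGamma p l"
  using assms unfolding tildeGamma_def by (cases x) auto

lemma tg_mul: assumes "x \<in> tildeGamma p l" "y \<in> tildeGamma p l" "odd p" "odd l"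
  shows "qmul x y \<in> tildeGamma p l"
proof -
  obtain x0 x1 x2 x3 where x: "x = (x0, x1, x2, x3)" by (cases x) auto
  obtain y0 y1 y2 y3 where y: "y = (y0, y1, y2, y3)" by (cases y) auto
  obtain r s where rs: "qnorm x = int p ^ r * int l ^ s" using tg_norm[OF assms(1)] by blast
  obtain r' s' where rs': "qnorm y = int p ^ r' * int l ^ s'" using tg_norm[OF assms(2)] by blast
  have n: "qnorm (qmul x y) = int p ^ (r + r') * int l ^ (s + s')"
    unfolding qnorm_mul rs rs' by (simp add: power_add ac_simps)
  have ox: "odd (qnorm x)" unfolding rs using assms(3,4) by simp
  have oy: "odd (qnorm y)" unfolding rs' using assms(3,4) by simp
  have m: "qnorm (qmul x y) mod 4 = ((qnorm x mod 4) * (qnorm y mod 4)) mod 4"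
    unfolding qnorm_mul by (simp add: mod_mult_eq)
  have cx: "(qnorm x mod 4 = 1 \<and> odd x0 \<and> even x1 \<and> even x2 \<and> even x3) \<or>
            (qnorm x mod 4 = 3 \<and> even x1 \<and> odd x0 \<and> odd x2 \<and> odd x3)"
    using odd_mod4[OF ox] assms(1) unfolding x tildeGamma_def by auto
  have cy: "(qnorm y mod 4 = 1 \<and> odd y0 \<and> even y1 \<and> even y2 \<and> even y3) \<or>
            (qnorm y mod 4 = 3 \<and> even y1 \<and> odd y0 \<and> odd y2 \<and> odd y3)"
    using odd_mod4[OF oy] assms(2) unfolding y tildeGamma_def by auto
  obtain z0 z1 z2 z3 where z: "qmul x y = (z0, z1, z2, z3)" by (cases "qmul x y") auto
  have zd: "z0 = x0*y0 - x1*y1 - x2*y2 - x3*y3" "z1 = x0*y1 + x1*y0 + x2*y3 - x3*y2"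
     "z2 = x0*y2 - x1*y3 + x2*y0 + x3*y1" "z3 = x0*y3 + x1*y2 - x2*y1 + x3*y0"
    using z unfolding x y by auto
  have "(qnorm (qmul x y) mod 4 = 1 \<longrightarrow> odd z0 \<and> even z1 \<and> even z2 \<and> even z3) \<and>
        (qnorm (qmul x y) mod 4 = 3 \<longrightarrow> even z1 \<and> odd z0 \<and> odd z2 \<and> odd z3)"
    using cx cy unfolding m zd by (auto simp: even_add even_diff)
  thus ?thesis using n unfolding z tildeGamma_def by auto
qed


fun SQ :: "seq \<Rightarrow> seq \<Rightarrow> quat \<Rightarrow> seq4" where
  "SQ C D (x0, x1, x2, x3) =
    (\<lambda>n. of_int x0 + of_int x1 * C n + of_int x3 * D n,
     \<lambda>n. - (of_int x1 * D n) + of_int x2 + of_int x3 * C n,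
     \<lambda>n. - (of_int x1 * D n) - of_int x2 + of_int x3 * C n,
     \<lambda>n. of_int x0 - of_int x1 * C n - of_int x3 * D n)"

fun q13 :: "quat \<Rightarrow> int" where "q13 (x0, x1, x2, x3) = x1*x1 + x3*x3"

lemma null_lin2: assumes "prime p" "pnull p X" "pnull p Y" "pcauchy p U" "pcauchy p V"
  "\<And>n. Z n = U n * X n + V n * Y n" shows "pnull p Z"
proof -
  have "pnull p (\<lambda>n. U n * X n + V n * Y n)"
    using null_add[OF assms(1) null_mul'[OF assms(1,4,2)] null_mul'[OF assms(1,5,3)]] .
  moreover have "Z = (\<lambda>n. U n * X n + V n * Y n)" using assms(6) by (rule ext)
  ultimately show ?thesis by simp
qed

lemma null_lin3: assumes "prime p" "pnull p X" "pnull p Y" "pnull p W" "pcauchy p U" "pcauchy p V" "pcauchy p R"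
  "\<And>n. Z n = U n * X n + V n * Y n + R n * W n" shows "pnull p Z"
proof -
  have "pnull p (\<lambda>n. U n * X n + V n * Y n + R n * W n)"
    using null_add[OF assms(1) null_add[OF assms(1) null_mul'[OF assms(1,5,2)] null_mul'[OF assms(1,6,3)]]
       null_mul'[OF assms(1,7,4)]] .
  moreover have "Z = (\<lambda>n. U n * X n + V n * Y n + R n * W n)" using assms(8) by (rule ext)
  ultimately show ?thesis by simp
qed

locale qps =
  fixes p :: nat and c d :: qp and C D :: seq
  assumes p: "prime p"
    and cd: "qp_add p (qp_add p (qp_mul p c c) (qp_mul p d d)) (qp_one p) = qp_zero p"
    and CD: "pcauchy p C" "pcauchy p D" "c = qp_cls p C" "d = qp_cls p D"
begin

definition "E = (\<lambda>n. C n * C n + D n * D n + 1)"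

lemma cauchy_E: "pcauchy p E"
  unfolding E_def by (intro cauchy_add[OF p] cauchy_mul[OF p] CD cauchy_const[OF p])

lemma E_null: "pnull p E"
proof -
  have "qp_cls p E = qp_zero p"
    using cd unfolding CD(3,4) one_cls[OF p] E_def
    by (simp add: mul_cls[OF p] add_cls[OF p] CD cauchy_mul[OF p] cauchy_add[OF p] cauchy_const[OF p])
  thus ?thesis using cls_zero_iff[OF p cauchy_E] by simp
qed

lemma sc4_SQ: "sc4 p (SQ C D x)"
  using CD by (cases x) (simp add: cauchy_add[OF p] cauchy_mul[OF p] cauchy_sub[OF p] cauchy_neg[OF p] cauchy_const[OF p])

lemma psi_SQ: "psi_mat p c d x = qc p (SQ C D x)"
  unfolding CD(3,4) using CD(1,2) by (cases x) (simp add: Let_def of_int_cls[OF p] add_cls[OF p] mul_cls[OF p] neg_cls[OF p] sub_cls[OF p]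
      cauchy_add[OF p] cauchy_mul[OF p] cauchy_sub[OF p] cauchy_neg[OF p] cauchy_const[OF p])

lemma null_cE: "pnull p (\<lambda>n. k * E n)"
  using null_mul'[OF p cauchy_const[OF p] E_null] .

lemma SQ_mul: "snull4 p (smul (SQ C D x) (SQ C D y)) (SQ C D (qmul x y))"
proof -
  obtain x0 x1 x2 x3 where x: "x = (x0, x1, x2, x3)" by (cases x) auto
  obtain y0 y1 y2 y3 where y: "y = (y0, y1, y2, y3)" by (cases y) auto
  let ?a = "of_int (x1*y1 + x3*y3) :: rat"
  let ?b = "of_int (x1*y3 - x3*y1) :: rat"
  have 1: "pnull p (\<lambda>n. ?a * E n)" "pnull p (\<lambda>n. ?b * E n)" "pnull p (\<lambda>n. (- ?b) * E n)"
    by (rule null_cE)+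
  have e: "(\<lambda>n. fst (smul (SQ C D x) (SQ C D y)) n - fst (SQ C D (qmul x y)) n) = (\<lambda>n. ?a * E n)"
          "(\<lambda>n. fst (snd (smul (SQ C D x) (SQ C D y))) n - fst (snd (SQ C D (qmul x y))) n) = (\<lambda>n. ?b * E n)"
          "(\<lambda>n. fst (snd (snd (smul (SQ C D x) (SQ C D y)))) n - fst (snd (snd (SQ C D (qmul x y)))) n) = (\<lambda>n. (- ?b) * E n)"
          "(\<lambda>n. snd (snd (snd (smul (SQ C D x) (SQ C D y)))) n - snd (snd (snd (SQ C D (qmul x y)))) n) = (\<lambda>n. ?a * E n)"
    unfolding x y E_def by (simp_all add: algebra_simps)
  show ?thesis using 1 e unfolding x y by simp
qed

lemma sdet_SQ: "sdet (SQ C D x) = (\<lambda>n. of_int (qnorm x) - of_int (q13 x) * E n)"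
  unfolding E_def by (cases x) (simp add: algebra_simps power2_eq_square)

lemma psi_GL2: assumes "qnorm x \<noteq> 0" shows "psi_mat p c d x \<in> GL2 p"
proof -
  have "\<not> pnull p (sdet (SQ C D x))"
  proof
    assume h: "pnull p (sdet (SQ C D x))"
    let ?k = "of_int (q13 x) :: rat"
    have "pnull p (\<lambda>n. sdet (SQ C D x) n + ?k * E n)" using null_add[OF p h null_cE] .
    hence "pnull p (\<lambda>n. of_int (qnorm x))" unfolding sdet_SQ by simp
    hence "(of_int (qnorm x) :: rat) = 0" by (rule null_const[OF p])
    thus False using assms by simp
  qed
  thus ?thesis unfolding psi_SQ using GL2_qc[OF p sc4_SQ] by simp
qed

lemma psi_mul: assumes "qnorm x \<noteq> 0" "qnorm y \<noteq> 0"
  shows "pgl_mul p (pgl_cls p (psi_mat p c d x)) (pgl_cls p (psi_mat p c d y)) = pgl_cls p (psi_mat p c d (qmul x y))"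
proof -
  have "m2_mul p (psi_mat p c d x) (psi_mat p c d y) = qc p (smul (SQ C D x) (SQ C D y))"
    unfolding psi_SQ by (rule m2_mul_qc[OF p sc4_SQ sc4_SQ])
  also have "\<dots> = psi_mat p c d (qmul x y)"
    unfolding psi_SQ using qc_eq[OF p sc4_smul[OF p sc4_SQ sc4_SQ] sc4_SQ] SQ_mul by simp
  finally show ?thesis using pgl_mul_cls[OF p psi_GL2[OF assms(1)] psi_GL2[OF assms(2)]] by simp
qed

lemma psi_one: "psi_mat p c d (1, 0, 0, 0) = (qp_one p, qp_zero p, qp_zero p, qp_one p)"
proof -
  have "SQ C D (1, 0, 0, 0) = (\<lambda>n. 1, \<lambda>n. 0, \<lambda>n. 0, \<lambda>n. 1)" by simp
  thus ?thesis unfolding psi_SQ by (simp add: qp_one_def qp_zero_def qp_of_int_def)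
qed

lemma psi_eq_if: assumes "qprop x y" "qre x \<noteq> 0" "qre y \<noteq> 0"
  shows "pgl_cls p (psi_mat p c d x) = pgl_cls p (psi_mat p c d y)"
proof -
  obtain x0 x1 x2 x3 where x: "x = (x0, x1, x2, x3)" by (cases x) auto
  obtain y0 y1 y2 y3 where y: "y = (y0, y1, y2, y3)" by (cases y) auto
  have pr: "y0*x1 = x0*y1" "y0*x2 = x0*y2" "y0*x3 = x0*y3" using assms(1) unfolding x y by auto
  have nz: "x0 \<noteq> 0" "y0 \<noteq> 0" using assms(2,3) unfolding x y by auto
  have "m2_scale p (qp_of_int p y0) (psi_mat p c d x) = qc p (sscale (\<lambda>n. of_int y0) (SQ C D x))"
    unfolding psi_SQ of_int_cls[OF p] by (rule m2_scale_qc[OF p cauchy_const[OF p] sc4_SQ])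
  also have "sscale (\<lambda>n. of_int y0) (SQ C D x) = sscale (\<lambda>n. of_int x0) (SQ C D y)"
  proof -
    have a: "of_int y0 * (of_int x1 :: rat) = of_int x0 * of_int y1"
            "of_int y0 * (of_int x2 :: rat) = of_int x0 * of_int y2"
            "of_int y0 * (of_int x3 :: rat) = of_int x0 * of_int y3"
      using pr by (simp_all only: of_int_mult[symmetric] of_int_eq_iff)
    have b: "\<And>Z. (of_int x1 :: rat) * (of_int y0 * Z) = of_int x0 * (of_int y1 * Z)"
            "\<And>Z. (of_int x2 :: rat) * (of_int y0 * Z) = of_int x0 * (of_int y2 * Z)"
            "\<And>Z. (of_int x3 :: rat) * (of_int y0 * Z) = of_int x0 * (of_int y3 * Z)"
    proof -
      fix Z :: rat
      have "(of_int x1 :: rat) * (of_int y0 * Z) = (of_int y0 * of_int x1) * Z" by (simp add: algebra_simps)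
      also have "\<dots> = of_int x0 * (of_int y1 * Z)" unfolding a by (simp add: algebra_simps)
      finally show "(of_int x1 :: rat) * (of_int y0 * Z) = of_int x0 * (of_int y1 * Z)" .
      have "(of_int x2 :: rat) * (of_int y0 * Z) = (of_int y0 * of_int x2) * Z" by (simp add: algebra_simps)
      also have "\<dots> = of_int x0 * (of_int y2 * Z)" unfolding a by (simp add: algebra_simps)
      finally show "(of_int x2 :: rat) * (of_int y0 * Z) = of_int x0 * (of_int y2 * Z)" .
      have "(of_int x3 :: rat) * (of_int y0 * Z) = (of_int y0 * of_int x3) * Z" by (simp add: algebra_simps)
      also have "\<dots> = of_int x0 * (of_int y3 * Z)" unfolding a by (simp add: algebra_simps)
      finally show "(of_int x3 :: rat) * (of_int y0 * Z) = of_int x0 * (of_int y3 * Z)" .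
    qed
    have "\<And>n. of_int y0 * (of_int x0 + of_int x1 * C n + of_int x3 * D n) = (of_int x0 :: rat) * (of_int y0 + of_int y1 * C n + of_int y3 * D n)"
         "\<And>n. of_int y0 * (- (of_int x1 * D n) + of_int x2 + of_int x3 * C n) = (of_int x0 :: rat) * (- (of_int y1 * D n) + of_int y2 + of_int y3 * C n)"
         "\<And>n. of_int y0 * (- (of_int x1 * D n) - of_int x2 + of_int x3 * C n) = (of_int x0 :: rat) * (- (of_int y1 * D n) - of_int y2 + of_int y3 * C n)"
         "\<And>n. of_int y0 * (of_int x0 - of_int x1 * C n - of_int x3 * D n) = (of_int x0 :: rat) * (of_int y0 - of_int y1 * C n - of_int y3 * D n)"
      using a by algebra+
    thus ?thesis unfolding x y by simp
  qed
  also have "qc p \<dots> = m2_scale p (qp_of_int p x0) (psi_mat p c d y)"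
    unfolding psi_SQ of_int_cls[OF p] by (rule m2_scale_qc[OF p cauchy_const[OF p] sc4_SQ, symmetric])
  finally have e: "m2_scale p (qp_of_int p y0) (psi_mat p c d x) = m2_scale p (qp_of_int p x0) (psi_mat p c d y)" .
  have q: "qp_of_int p z \<in> Qp p" for z unfolding of_int_cls[OF p] by (rule cls_mem[OF p cauchy_const[OF p]])
  have "pgl_cls p (psi_mat p c d x) = pgl_cls p (m2_scale p (qp_of_int p y0) (psi_mat p c d x))"
    using pgl_scale[OF p q of_int_nz[OF p nz(2)] psi_GL2] qnorm_pos assms(2) by simp
  also have "\<dots> = pgl_cls p (psi_mat p c d y)"
    unfolding e using pgl_scale[OF p q of_int_nz[OF p nz(1)] psi_GL2] qnorm_pos assms(3) by simp
  finally show ?thesis .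
qed

lemma psi_eq_imp: assumes "qnorm x \<noteq> 0" "pgl_cls p (psi_mat p c d x) = pgl_cls p (psi_mat p c d y)"
  shows "qprop x y"
proof -
  obtain x0 x1 x2 x3 where x: "x = (x0, x1, x2, x3)" by (cases x) auto
  obtain y0 y1 y2 y3 where y: "y = (y0, y1, y2, y3)" by (cases y) auto
  obtain t where t: "t \<in> Qp p" "t \<noteq> qp_zero p" "psi_mat p c d x = m2_scale p t (psi_mat p c d y)"
    using pgl_eq[OF p psi_GL2[OF assms(1)] assms(2)] by blast
  obtain T where T: "pcauchy p T" "t = qp_cls p T" using Qp_cases[OF p t(1)] by blast
  have "qc p (SQ C D x) = qc p (sscale T (SQ C D y))"
    using t(3) unfolding psi_SQ T(2) m2_scale_qc[OF p T(1) sc4_SQ] .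
  hence "snull4 p (SQ C D x) (sscale T (SQ C D y))"
    using qc_eq[OF p sc4_SQ sc4_sscale[OF p T(1) sc4_SQ]] by simp
  hence h: "pnull p (\<lambda>n. (of_int x0 + of_int x1 * C n + of_int x3 * D n) - T n * (of_int y0 + of_int y1 * C n + of_int y3 * D n))"
           "pnull p (\<lambda>n. (- (of_int x1 * D n) + of_int x2 + of_int x3 * C n) - T n * (- (of_int y1 * D n) + of_int y2 + of_int y3 * C n))"
           "pnull p (\<lambda>n. (- (of_int x1 * D n) - of_int x2 + of_int x3 * C n) - T n * (- (of_int y1 * D n) - of_int y2 + of_int y3 * C n))"
           "pnull p (\<lambda>n. (of_int x0 - of_int x1 * C n - of_int x3 * D n) - T n * (of_int y0 - of_int y1 * C n - of_int y3 * D n))"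
    unfolding x y by simp_all
  define f where "f = (\<lambda>(a::int) (b::int) n. of_int a - T n * of_int b)"
  have cf: "pcauchy p (f a b)" for a b unfolding f_def
    by (simp add: cauchy_sub[OF p] cauchy_mul[OF p] cauchy_const[OF p] T(1))
  have hc: "pcauchy p (\<lambda>n. 1/2)" "pcauchy p (\<lambda>n. - (1/2))" by (rule cauchy_const[OF p])+
  have f0: "pnull p (f x0 y0)"
    by (rule null_lin2[OF p h(1) h(4) hc(1) hc(1)]) (simp add: f_def field_simps)
  have f2: "pnull p (f x2 y2)"
    by (rule null_lin2[OF p h(2) h(3) hc(1) hc(2)]) (simp add: f_def field_simps)
  have g: "pnull p (\<lambda>n. f x1 y1 n * C n + f x3 y3 n * D n)"
    by (rule null_lin2[OF p h(1) h(4) hc(1) hc(2)]) (simp add: f_def field_simps)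
  have hh: "pnull p (\<lambda>n. - (f x1 y1 n * D n) + f x3 y3 n * C n)"
    by (rule null_lin2[OF p h(2) h(3) hc(1) hc(1)]) (simp add: f_def field_simps)
  have cnC: "pcauchy p (\<lambda>n. - C n)" "pcauchy p (\<lambda>n. - D n)" using cauchy_neg[OF p CD(1)] cauchy_neg[OF p CD(2)] by auto
  have f1: "pnull p (f x1 y1)"
    by (rule null_lin3[OF p E_null g hh cf cnC(1) CD(2)]) (simp add: E_def algebra_simps)
  have f3: "pnull p (f x3 y3)"
    by (rule null_lin3[OF p E_null g hh cf cnC(2) cnC(1)]) (simp add: E_def algebra_simps)
  have fin: "a = b" if "pnull p (f u v)" "y0 * u = x0 * v \<longleftrightarrow> a = b" for u v a b
  proof -
    have "pnull p (\<lambda>n. of_int (y0 * u - x0 * v))"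
      by (rule null_lin2[OF p that(1) f0 cauchy_const[OF p] cauchy_const[OF p], of _ "of_int y0" "- of_int v"])
         (simp add: f_def algebra_simps)
    hence "(of_int (y0 * u - x0 * v) :: rat) = 0" by (rule null_const[OF p])
    hence "y0 * u - x0 * v = 0" by (simp only: of_int_eq_0_iff)
    hence "y0 * u = x0 * v" by simp
    thus ?thesis using that(2) by blast
  qed
  have "y0*x1 = x0*y1" by (rule fin[OF f1]) simp
  moreover have "y0*x2 = x0*y2" by (rule fin[OF f2]) simp
  moreover have "y0*x3 = x0*y3" by (rule fin[OF f3]) simp
  ultimately show ?thesis unfolding x y by simp
qed

end


lemma inv_unique: assumes "qmul x w = (r, 0, 0, 0)" "qnorm x \<noteq> 0" shows "qprop w (qconj x)"
proof -
  obtain x0 x1 x2 x3 where x: "x = (x0, x1, x2, x3)" by (cases x) auto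
  obtain w0 w1 w2 w3 where w: "w = (w0, w1, w2, w3)" by (cases w) auto
  define N where "N = qnorm x"
  have "qmul (qconj x) (qmul x w) = qmul (qmul (qconj x) x) w" by (simp add: qmul_assoc)
  hence "qmul (qconj x) (r, 0, 0, 0) = qmul (N, 0, 0, 0) w" unfolding assms(1) qmul_conj N_def .
  hence e: "x0*r = N*w0" "-(x1*r) = N*w1" "-(x2*r) = N*w2" "-(x3*r) = N*w3"
    unfolding x w by simp_all
  have N0: "N \<noteq> 0" using assms(2) N_def by simp
  have h: "N*(x0*w1) = N*(w0*(-x1))" "N*(x0*w2) = N*(w0*(-x2))" "N*(x0*w3) = N*(w0*(-x3))"
    using e by algebra+
  have "x0*w1 = w0*(-x1)" "x0*w2 = w0*(-x2)" "x0*w3 = w0*(-x3)"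
    by (rule iffD1[OF mult_left_cancel[OF N0] h(1)], rule iffD1[OF mult_left_cancel[OF N0] h(2)],
        rule iffD1[OF mult_left_cancel[OF N0] h(3)])
  thus ?thesis unfolding x w by simp
qed

lemma qprop_refl: "qprop x x" by (cases x) (simp add: mult.commute)

lemma real_conj: "qmul (qmul g (a0, 0, 0, 0)) (qconj g) = (a0 * qnorm g, 0, 0, 0)"
  by (cases g) (simp add: algebra_simps power2_eq_square)

theorem proposition2p6:
  fixes p l :: nat and cp dp cl dl :: qp
  assumes "prime p" and "prime l" and "odd p" and "odd l" and "p \<noteq> l"
    and "cp \<in> Qp p" and "dp \<in> Qp p"
    and "qp_add p (qp_add p (qp_mul p cp cp) (qp_mul p dp dp)) (qp_one p) = qp_zero p"
    and "cl \<in> Qp l" and "dl \<in> Qp l"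
    and "qp_add l (qp_add l (qp_mul l cl cl) (qp_mul l dl dl)) (qp_one l) = qp_zero l"
  shows "CSA_group (Gamma_grp p l cp dp cl dl)"
proof -
  interpret P: qps p cp dp "qp_rep cp" "qp_rep dp"
    using assms(1,8) Qp_rep[OF assms(1) assms(6)] Qp_rep[OF assms(1) assms(7)]
    by unfold_locales auto
  interpret L: qps l cl dl "qp_rep cl" "qp_rep dl"
    using assms(2,11) Qp_rep[OF assms(2) assms(9)] Qp_rep[OF assms(2) assms(10)]
    by unfold_locales auto
  define H where "H = Gamma_grp p l cp dp cl dl"
  define \<Phi> where "\<Phi> = psi p l cp dp cl dl"
  define TG where "TG = tildeGamma p l"
  have carr: "carrier H = \<Phi> ` TG" unfolding H_def \<Phi>_def TG_def Gamma_grp_def by simp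
  have mult: "a \<otimes>\<^bsub>H\<^esub> b = (pgl_mul p (fst a) (fst b), pgl_mul l (snd a) (snd b))" for a b
    unfolding H_def Gamma_grp_def G_grp_def by (cases a, cases b) simp
  have one: "\<one>\<^bsub>H\<^esub> = (pgl_one p, pgl_one l)"
    unfolding H_def Gamma_grp_def G_grp_def by simp
  have tgre: "qre x \<noteq> 0" if "x \<in> TG" for x
    using tg_re[OF that[unfolded TG_def] assms(3,4)] by (cases x) auto
  have tgn: "qnorm x \<noteq> 0" if "x \<in> TG" for x using qnorm_pos[OF tgre[OF that]] .
  have tgm: "qmul x y \<in> TG" if "x \<in> TG" "y \<in> TG" for x y
    using tg_mul[OF that[unfolded TG_def] assms(3,4)] unfolding TG_def .
  have tgc: "qconj x \<in> TG" if "x \<in> TG" for x using tg_conj that unfolding TG_def by blast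
  have tg1: "(1, 0, 0, 0) \<in> TG" unfolding TG_def by (rule tg_one)
  have HM: "\<Phi> x \<otimes>\<^bsub>H\<^esub> \<Phi> y = \<Phi> (qmul x y)" if "qnorm x \<noteq> 0" "qnorm y \<noteq> 0" for x y
    unfolding mult \<Phi>_def psi_def using P.psi_mul[OF that] L.psi_mul[OF that] by simp
  have HMt: "\<Phi> x \<otimes>\<^bsub>H\<^esub> \<Phi> y = \<Phi> (qmul x y)" if "x \<in> TG" "y \<in> TG" for x y
    using HM tgn that by blast
  have HE: "\<Phi> x = \<Phi> y \<longleftrightarrow> qprop x y" if "qre x \<noteq> 0" "qre y \<noteq> 0" for x y
  proof
    assume "\<Phi> x = \<Phi> y"
    hence "pgl_cls p (psi_mat p cp dp x) = pgl_cls p (psi_mat p cp dp y)" unfolding \<Phi>_def psi_def by simp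
    thus "qprop x y" by (rule P.psi_eq_imp[OF qnorm_pos[OF that(1)]])
  next
    assume "qprop x y"
    thus "\<Phi> x = \<Phi> y" unfolding \<Phi>_def psi_def
      using P.psi_eq_if[OF _ that] L.psi_eq_if[OF _ that] by simp
  qed
  have H1: "\<one>\<^bsub>H\<^esub> = \<Phi> (1, 0, 0, 0)"
    unfolding one \<Phi>_def psi_def P.psi_one L.psi_one pgl_one_def by simp
  have Hreal: "\<Phi> (r, 0, 0, 0) = \<one>\<^bsub>H\<^esub>" if "r \<noteq> 0" for r
    unfolding H1 using HE[of "(r, 0, 0, 0)" "(1, 0, 0, 0)"] that by simp
  have HI: "inv\<^bsub>H\<^esub> (\<Phi> x) = \<Phi> (qconj x)" if x: "x \<in> TG" for x
  proof -
    have a: "\<Phi> x \<otimes>\<^bsub>H\<^esub> \<Phi> (qconj x) = \<one>\<^bsub>H\<^esub>"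
      unfolding HMt[OF x tgc[OF x]] qmul_conj using Hreal tgn[OF x] by simp
    have b: "\<Phi> (qconj x) \<otimes>\<^bsub>H\<^esub> \<Phi> x = \<one>\<^bsub>H\<^esub>"
      unfolding HMt[OF tgc[OF x] x] qmul_conj using Hreal tgn[OF x] by simp
    have c: "y = \<Phi> (qconj x)" if yc: "y \<in> carrier H" "\<Phi> x \<otimes>\<^bsub>H\<^esub> y = \<one>\<^bsub>H\<^esub>" for y
    proof -
      obtain w where w: "w \<in> TG" "y = \<Phi> w" using yc(1) carr by blast
      have "\<Phi> (qmul x w) = \<Phi> (1, 0, 0, 0)" using yc(2) unfolding w(2) HMt[OF x w(1)] H1 .
      hence "qprop (qmul x w) (1, 0, 0, 0)" using HE tgre[OF tgm[OF x w(1)]] by simp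
      then obtain r where "qmul x w = (r, 0, 0, 0)" using qprop_one by blast
      hence "qprop w (qconj x)" using inv_unique tgn[OF x] by blast
      thus ?thesis unfolding w(2) using HE tgre[OF w(1)] tgre[OF tgc[OF x]] by simp
    qed
    show ?thesis unfolding m_inv_def
      by (rule the_equality) (use a b c tgc[OF x] carr in auto)
  qed
  have comm: "\<Phi> y \<otimes>\<^bsub>H\<^esub> \<Phi> a = \<Phi> a \<otimes>\<^bsub>H\<^esub> \<Phi> y \<longleftrightarrow> qmul y a = qmul a y" if "y \<in> TG" "a \<in> TG" for y a
  proof -
    have "\<Phi> y \<otimes>\<^bsub>H\<^esub> \<Phi> a = \<Phi> a \<otimes>\<^bsub>H\<^esub> \<Phi> y \<longleftrightarrow> qprop (qmul y a) (qmul a y)"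
      unfolding HMt[OF that] HMt[OF that(2,1)] using HE tgre tgm that by blast
    also have "\<dots> \<longleftrightarrow> qmul y a = qmul a y"
    proof
      assume "qprop (qmul y a) (qmul a y)"
      thus "qmul y a = qmul a y" using qprop_eq qre_comm tgre[OF tgm[OF that]] by blast
    next
      assume "qmul y a = qmul a y"
      thus "qprop (qmul y a) (qmul a y)" using qprop_refl by simp
    qed
    finally show ?thesis .
  qed
  show ?thesis unfolding CSA_group_def H_def[symmetric]
  proof (intro allI impI)
    fix A assume "maximal_abelian_subgroup A H"
    hence sub: "subgroup A H" and ab: "abelian_set H A"
      and mx: "\<And>B. subgroup B H \<Longrightarrow> abelian_set H B \<Longrightarrow> A \<subseteq> B \<Longrightarrow> B = A"
      unfolding maximal_abelian_subgroup_def by blast+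
    show "malnormal A H" unfolding malnormal_def
    proof
      fix g assume g: "g \<in> carrier H - A"
      obtain \<gamma> where ga: "\<gamma> \<in> TG" "g = \<Phi> \<gamma>" using g carr by auto
      have "\<one>\<^bsub>H\<^esub> \<in> A" using subgroup.one_closed[OF sub] .
      moreover have "g \<otimes>\<^bsub>H\<^esub> \<one>\<^bsub>H\<^esub> \<otimes>\<^bsub>H\<^esub> inv\<^bsub>H\<^esub> g = \<one>\<^bsub>H\<^esub>"
        unfolding ga(2) HI[OF ga(1)] H1 HMt[OF ga(1) tg1] qmul_one HMt[OF ga(1) tgc[OF ga(1)]] qmul_conj
        using Hreal tgn[OF ga(1)] by simp
      ultimately have "\<exists>a. \<one>\<^bsub>H\<^esub> = g \<otimes>\<^bsub>H\<^esub> a \<otimes>\<^bsub>H\<^esub> inv\<^bsub>H\<^esub> g \<and> a \<in> A"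
        by (intro exI[of _ "\<one>\<^bsub>H\<^esub>"]) simp
      hence sup: "\<one>\<^bsub>H\<^esub> \<in> {g \<otimes>\<^bsub>H\<^esub> a \<otimes>\<^bsub>H\<^esub> inv\<^bsub>H\<^esub> g | a. a \<in> A} \<inter> A"
        using \<open>\<one>\<^bsub>H\<^esub> \<in> A\<close> by blast
      have sb: "z = \<one>\<^bsub>H\<^esub>" if z: "z \<in> {g \<otimes>\<^bsub>H\<^esub> a \<otimes>\<^bsub>H\<^esub> inv\<^bsub>H\<^esub> g | a. a \<in> A} \<inter> A" for z
      proof -
        obtain a where a: "a \<in> A" "z = g \<otimes>\<^bsub>H\<^esub> a \<otimes>\<^bsub>H\<^esub> inv\<^bsub>H\<^esub> g" using z by blast
        have zA: "z \<in> A" using z by blast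
        obtain \<alpha> where al: "\<alpha> \<in> TG" "a = \<Phi> \<alpha>" using a(1) subgroup.subset[OF sub] carr by auto
        define \<beta> where "\<beta> = qmul (qmul \<gamma> \<alpha>) (qconj \<gamma>)"
        have bt: "\<beta> \<in> TG" unfolding \<beta>_def using tgm tgc ga(1) al(1) by blast
        have zb: "z = \<Phi> \<beta>" unfolding a(2) ga(2) al(2) HI[OF ga(1)] HMt[OF ga(1) al(1)]
          HMt[OF tgm[OF ga(1) al(1)] tgc[OF ga(1)]] \<beta>_def ..
        obtain a0 u1 u2 u3 where au: "\<alpha> = (a0, u1, u2, u3)" by (cases \<alpha>) auto
        show ?thesis
        proof (cases "(u1, u2, u3) = (0, 0, 0)")
          case True
          hence "\<beta> = (a0 * qnorm \<gamma>, 0, 0, 0)" unfolding \<beta>_def au using real_conj by simp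
          moreover have "a0 * qnorm \<gamma> \<noteq> 0" using tgre[OF bt] calculation by simp
          ultimately show ?thesis unfolding zb using Hreal by simp
        next
          case False
          define Cn where "Cn = {y \<in> carrier H. y \<otimes>\<^bsub>H\<^esub> a = a \<otimes>\<^bsub>H\<^esub> y}"
          have Cn_iff: "\<Phi> y \<in> Cn \<longleftrightarrow> qmul y \<alpha> = qmul \<alpha> y" if "y \<in> TG" for y
            unfolding Cn_def al(2) using comm[OF that al(1)] carr that by auto
          have Cn_el: "\<exists>y. y \<in> TG \<and> w = \<Phi> y \<and> qmul y \<alpha> = qmul \<alpha> y" if hw: "w \<in> Cn" for w
          proof -
            obtain y where y: "y \<in> TG" "w = \<Phi> y" using hw carr unfolding Cn_def by blast
            thus ?thesis using Cn_iff[OF y(1)] hw by blast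
          qed
          have sgC: "subgroup Cn H"
          proof
            show "Cn \<subseteq> carrier H" unfolding Cn_def by blast
          next
            fix x y assume "x \<in> Cn" "y \<in> Cn"
            then obtain \<eta>1 \<eta>2 where e: "\<eta>1 \<in> TG" "x = \<Phi> \<eta>1" "qmul \<eta>1 \<alpha> = qmul \<alpha> \<eta>1"
              "\<eta>2 \<in> TG" "y = \<Phi> \<eta>2" "qmul \<eta>2 \<alpha> = qmul \<alpha> \<eta>2" using Cn_el by meson
            have "qmul (qmul \<eta>1 \<eta>2) \<alpha> = qmul \<alpha> (qmul \<eta>1 \<eta>2)"
              by (metis e(3) e(6) qmul_assoc)
            thus "x \<otimes>\<^bsub>H\<^esub> y \<in> Cn" unfolding e(2,5) HMt[OF e(1,4)] using Cn_iff tgm e(1,4) by blast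
          next
            show "\<one>\<^bsub>H\<^esub> \<in> Cn" unfolding H1 using Cn_iff[OF tg1] qmul_one by simp
          next
            fix x assume "x \<in> Cn"
            then obtain \<eta> where e: "\<eta> \<in> TG" "x = \<Phi> \<eta>" "qmul \<eta> \<alpha> = qmul \<alpha> \<eta>" using Cn_el by meson
            show "inv\<^bsub>H\<^esub> x \<in> Cn" unfolding e(2) HI[OF e(1)]
              using Cn_iff[OF tgc[OF e(1)]] comm_conj[OF e(3)] by simp
          qed
          have abC: "abelian_set H Cn" unfolding abelian_set_def
          proof (intro ballI)
            fix x y assume "x \<in> Cn" "y \<in> Cn"
            then obtain \<eta>1 \<eta>2 where e: "\<eta>1 \<in> TG" "x = \<Phi> \<eta>1" "qmul \<eta>1 \<alpha> = qmul \<alpha> \<eta>1"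
              "\<eta>2 \<in> TG" "y = \<Phi> \<eta>2" "qmul \<eta>2 \<alpha> = qmul \<alpha> \<eta>2" using Cn_el by meson
            have "qmul \<eta>1 \<eta>2 = qmul \<eta>2 \<eta>1" by (rule comm_trans[OF e(3) e(6) au False])
            thus "x \<otimes>\<^bsub>H\<^esub> y = y \<otimes>\<^bsub>H\<^esub> x" unfolding e(2,5) HMt[OF e(1,4)] HMt[OF e(4,1)] by simp
          qed
          have "A \<subseteq> Cn" unfolding Cn_def using ab a(1) subgroup.subset[OF sub]
            unfolding abelian_set_def by blast
          hence CA: "Cn = A" using mx[OF sgC abC] by simp
          hence "\<Phi> \<beta> \<in> Cn" using zA zb by simp
          hence "qmul \<beta> \<alpha> = qmul \<alpha> \<beta>" using Cn_iff[OF bt] by simp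
          hence "qmul \<gamma> \<alpha> = qmul \<alpha> \<gamma>" using conj_comm tgre[OF ga(1)] unfolding \<beta>_def by blast
          hence "g \<in> Cn" unfolding ga(2) using Cn_iff[OF ga(1)] by simp
          thus ?thesis using g CA by simp
        qed
      qed
      show "{g \<otimes>\<^bsub>H\<^esub> a \<otimes>\<^bsub>H\<^esub> inv\<^bsub>H\<^esub> g | a. a \<in> A} \<inter> A = {\<one>\<^bsub>H\<^esub>}"
        using sup sb by blast
    qed
  qed
qed


end
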